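(* Let $k_0,k_1,k_{-1},k_2,e_T$ be nonnegative real parameters and consider the planar system \[ \dot s = k_0-k_1(e_T-c)s+k_{-1}c,\qquad \dot c = k_1(e_T-c)s-(k_{-1}+k_2)c . \] Then: (a) The system has infinitely many stationary points in $\mathbb{R}^2$ if and only if one of the following holds: $k_0=k_1=0$; $k_0=e_T=0$; $k_0=k_2=0$. (b) If the number of stationary points in $\mathbb{R}^2$ is finite, then it is $0$ or $1$. There is exactly one stationary point if and only if $k_1\neq 0$, $k_2\neq 0$ and $k_2e_T-k_0\neq 0$; in that case the stationary point is \[ P_0=(\widehat s,\widehat c)=\left(\frac{(k_{-1}+k_2)k_0}{k_1(k_2e_T-k_0)},\ \frac{k_0}{k_2}\right). \] This point lies in the first quadrant if and only if $k_2e_T-k_0>0$, in which case it is an attracting node; it lies in the second quadrant if and only if $k_2e_T-k_0<0$, in which case it is a saddle point. (c) The first quadrant is positively invariant, and solutions starting in the first quadrant exist for all $t\ge 0$. If $k_{-1}+k_2>0$, then every solution starting in the first quadrant enters the (positively invariant) subset $\{c\le e_T\}$ at some positive time. (d) The system admits no nonconstant closed trajectory.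
   Context: This is the mass-action model of the open Michaelis--Menten mechanism with constant substrate inflow: $s$ and $c$ are the concentrations of substrate and enzyme–substrate complex, $k_0$ the inflow rate, $k_1,k_{-1},k_2$ rate constants, and $e_T$ the total enzyme concentration. The "first quadrant" is $\{s\ge 0, c\ge 0\}$. *)

theory Defs
  imports "HOL-Analysis.Analysis"
begin

definition mm_field :: "real \<Rightarrow> real \<Rightarrow> real \<Rightarrow> real \<Rightarrow> real \<Rightarrow> real \<times> real \<Rightarrow> real \<times> real" where
  "mm_field k0 k1 km1 k2 eT = (\<lambda>(s, c).
     (k0 - k1 * (eT - c) * s + km1 * c, k1 * (eT - c) * s - (km1 + k2) * c))"

definition first_quadrant :: "(real \<times> real) set" where
  "first_quadrant = {p. fst p \<ge> 0 \<and> snd p \<ge> 0}"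

definition second_quadrant :: "(real \<times> real) set" where
  "second_quadrant = {p. fst p < 0 \<and> snd p > 0}"

definition is_solution :: "(real \<times> real \<Rightarrow> real \<times> real) \<Rightarrow> real set \<Rightarrow> (real \<Rightarrow> real \<times> real) \<Rightarrow> bool" where
  "is_solution F I x \<longleftrightarrow> is_interval I \<and>
     (\<forall>t\<in>I. (x has_vector_derivative F (x t)) (at t within I))"

definition jacobian2 :: "(real \<times> real \<Rightarrow> real \<times> real) \<Rightarrow> real \<times> real \<Rightarrow> real \<times> real \<times> real \<times> real" where
  "jacobian2 F p = (let L = (SOME L. (F has_derivative L) (at p))
     in (fst (L (1, 0)), fst (L (0, 1)), snd (L (1, 0)), snd (L (0, 1))))"

text \<open>(Complex) eigenvalues of the 2x2 real matrix ((a, b), (c, d)).\<close>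
definition eigenvalues2 :: "real \<times> real \<times> real \<times> real \<Rightarrow> complex set" where
  "eigenvalues2 M = (case M of (a, b, c, d) \<Rightarrow>
     {z. (complex_of_real a - z) * (complex_of_real d - z)
           - complex_of_real b * complex_of_real c = 0})"

definition attracting_node :: "(real \<times> real \<Rightarrow> real \<times> real) \<Rightarrow> real \<times> real \<Rightarrow> bool" where
  "attracting_node F p \<longleftrightarrow> F p = 0 \<and> F differentiable (at p) \<and>
     (\<forall>z\<in>eigenvalues2 (jacobian2 F p). Im z = 0 \<and> Re z < 0)"

definition saddle_point :: "(real \<times> real \<Rightarrow> real \<times> real) \<Rightarrow> real \<times> real \<Rightarrow> bool" where
  "saddle_point F p \<longleftrightarrow> F p = 0 \<and> F differentiable (at p) \<and>
     (\<forall>z\<in>eigenvalues2 (jacobian2 F p). Im z = 0 \<and> Re z \<noteq> 0) \<and>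
     (\<exists>z\<in>eigenvalues2 (jacobian2 F p). Re z < 0) \<and>
     (\<exists>z\<in>eigenvalues2 (jacobian2 F p). Re z > 0)"

end

theory Submission
  imports Defs
begin


lemma has_vector_derivative_within_Un:
  assumes "(f has_vector_derivative D) (at x within S)"
      and "(f has_vector_derivative D) (at x within T)"
  shows "(f has_vector_derivative D) (at x within (S \<union> T))"
  using assms unfolding has_vector_derivative_def has_derivative_within
  by (auto intro: Lim_Un)

lemma vd_fst:
  assumes "(x has_vector_derivative v) (at t within S)"
  shows "((\<lambda>t. fst (x t)) has_real_derivative fst v) (at t within S)"
  using bounded_linear.has_vector_derivative[OF bounded_linear_fst assms]
  by (simp add: has_real_derivative_iff_has_vector_derivative)

lemma vd_snd:
  assumes "(x has_vector_derivative v) (at t within S)"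
  shows "((\<lambda>t. snd (x t)) has_real_derivative snd v) (at t within S)"
  using bounded_linear.has_vector_derivative[OF bounded_linear_snd assms]
  by (simp add: has_real_derivative_iff_has_vector_derivative)

lemma left_deriv_nonpos:
  fixes g :: "real \<Rightarrow> real"
  assumes ab: "a < b" and d: "(g has_real_derivative D) (at b within {a..b})"
    and le: "\<forall>\<tau>\<in>{a..<b}. g b \<le> g \<tau>"
  shows "D \<le> 0"
proof -
  have "((\<lambda>y. (g y - g b) / (y - b)) \<longlongrightarrow> D) (at b within {a..b})"
    using d by (simp add: has_field_derivative_iff)
  then have lim: "((\<lambda>y. (g y - g b) / (y - b)) \<longlongrightarrow> D) (at_left b)"
    using at_within_Icc_at_left[OF ab] by simp
  have ev: "eventually (\<lambda>y. (g y - g b) / (y - b) \<le> 0) (at_left b)"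
    using le ab by (intro eventually_at_leftI[of a]) (auto intro!: divide_nonneg_neg)
  show ?thesis
    by (rule tendsto_upperbound[OF lim ev]) simp
qed

lemma left_limit_ge:
  fixes g :: "real \<Rightarrow> real"
  assumes ab: "a < b" and c: "continuous (at b within {a..b}) g"
    and le: "\<forall>\<tau>\<in>{a..<b}. 0 \<le> g \<tau>"
  shows "0 \<le> g b"
proof -
  have lim: "(g \<longlongrightarrow> g b) (at_left b)"
    using c at_within_Icc_at_left[OF ab] by (simp add: continuous_within)
  have ev: "eventually (\<lambda>y. 0 \<le> g y) (at_left b)"
    using le ab by (intro eventually_at_leftI[of a]) auto
  show ?thesis
    by (rule tendsto_lowerbound[OF lim ev]) simp
qed


lemma pos_pair_core:
  fixes u v u' v' :: "real \<Rightarrow> real"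
  assumes ab: "a \<le> b" and K: "K \<ge> 0" and e: "e > 0"
    and du: "\<forall>\<tau>\<in>{a..b}. (u has_real_derivative u' \<tau>) (at \<tau> within {a..b})"
    and dv: "\<forall>\<tau>\<in>{a..b}. (v has_real_derivative v' \<tau>) (at \<tau> within {a..b})"
    and u0: "u a \<ge> 0" and v0: "v a \<ge> 0"
    and hu: "\<forall>\<tau>\<in>{a..b}. u \<tau> < 0 \<longrightarrow> u' \<tau> \<ge> K * (min 0 (u \<tau>) + min 0 (v \<tau>))"
    and hv: "\<forall>\<tau>\<in>{a..b}. v \<tau> < 0 \<longrightarrow> v' \<tau> \<ge> K * (min 0 (u \<tau>) + min 0 (v \<tau>))"
  shows "\<forall>\<tau>\<in>{a..b}. u \<tau> + e * exp ((2*K+1) * (\<tau> - a)) > 0 \<and> v \<tau> + e * exp ((2*K+1) * (\<tau> - a)) > 0"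
proof (rule ccontr)
  define E where "E = (\<lambda>\<tau>. e * exp ((2*K+1) * (\<tau> - a)))"
  define U where "U = (\<lambda>\<tau>. u \<tau> + E \<tau>)"
  define V where "V = (\<lambda>\<tau>. v \<tau> + E \<tau>)"
  have dE: "(E has_real_derivative (2*K+1) * E \<tau>) (at \<tau> within S)" for \<tau> S
    unfolding E_def by (auto intro!: derivative_eq_intros)
  have dU: "(U has_real_derivative u' \<tau> + (2*K+1) * E \<tau>) (at \<tau> within {a..b})" if "\<tau> \<in> {a..b}" for \<tau>
    unfolding U_def using du that dE by (auto intro!: derivative_eq_intros)
  have dV: "(V has_real_derivative v' \<tau> + (2*K+1) * E \<tau>) (at \<tau> within {a..b})" if "\<tau> \<in> {a..b}" for \<tau>
    unfolding V_def using dv that dE by (auto intro!: derivative_eq_intros)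
  have cU: "continuous_on {a..b} U"
    unfolding continuous_on_eq_continuous_within using DERIV_continuous[OF dU] by simp
  have cV: "continuous_on {a..b} V"
    unfolding continuous_on_eq_continuous_within using DERIV_continuous[OF dV] by simp
  have Epos: "E \<tau> > 0" for \<tau> unfolding E_def using e by simp
  assume "\<not> ?thesis"
  then have ne: "{\<tau>\<in>{a..b}. U \<tau> \<le> 0} \<union> {\<tau>\<in>{a..b}. V \<tau> \<le> 0} \<noteq> {}"
    unfolding U_def V_def E_def by force
  define Z where "Z = {\<tau>\<in>{a..b}. U \<tau> \<le> 0} \<union> {\<tau>\<in>{a..b}. V \<tau> \<le> 0}"
  have clZ: "closed Z" unfolding Z_def
    by (intro closed_Un continuous_on_closed_Collect_le cU cV continuous_on_const) auto
  define t1 where "t1 = Inf Z"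
  have t1Z: "t1 \<in> Z" unfolding t1_def
    by (rule closed_contains_Inf) (use ne clZ Z_def in \<open>auto simp: bdd_below_def\<close>)
  have bddZ: "bdd_below Z" unfolding Z_def bdd_below_def by auto
  have below: "\<tau> \<notin> Z" if "\<tau> < t1" for \<tau>
  proof
    assume "\<tau> \<in> Z"
    then have "t1 \<le> \<tau>" unfolding t1_def using bddZ by (rule cInf_lower)
    then show False using that by simp
  qed
  have t1ab: "t1 \<in> {a..b}" using t1Z Z_def by auto
  have "a \<notin> Z" using u0 v0 Epos[of a] ab unfolding Z_def U_def V_def
    by auto
  then have at1: "a < t1" using t1Z t1ab by (metis atLeastAtMost_iff order_le_less)
  have pos_before: "U \<tau> > 0 \<and> V \<tau> > 0" if "\<tau> \<in> {a..<t1}" for \<tau>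
    using below[of \<tau>] that t1ab unfolding Z_def by auto
  have sub: "{a..t1} \<subseteq> {a..b}" using t1ab by auto
  have Ut1: "U t1 \<ge> 0"
    apply (rule left_limit_ge[OF at1])
    using cU sub t1ab continuous_on_subset[OF cU sub]
     apply (simp add: continuous_on_eq_continuous_within)
    using pos_before by (auto intro: less_imp_le)
  have Vt1: "V t1 \<ge> 0"
    apply (rule left_limit_ge[OF at1])
    using cV sub t1ab continuous_on_subset[OF cV sub]
     apply (simp add: continuous_on_eq_continuous_within)
    using pos_before by (auto intro: less_imp_le)
  show False
  proof (cases "U t1 \<le> 0")
    case True
    then have U0: "U t1 = 0" using Ut1 by simp
    then have ut: "u t1 = - E t1" unfolding U_def by simp
    have vt: "min 0 (v t1) \<ge> - E t1" using Vt1 Epos[of t1] unfolding V_def by simp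
    have "u' t1 \<ge> K * (min 0 (u t1) + min 0 (v t1))"
    proof -
      have "u t1 < 0" using ut Epos[of t1] by simp
      then show ?thesis using hu t1ab by blast
    qed
    also have "K * (min 0 (u t1) + min 0 (v t1)) \<ge> K * (- E t1 - E t1)"
      using ut vt Epos[of t1] K by (intro mult_left_mono) auto
    finally have "u' t1 + (2*K+1) * E t1 > 0" using Epos[of t1] by (simp add: algebra_simps)
    moreover have "u' t1 + (2*K+1) * E t1 \<le> 0"
      apply (rule left_deriv_nonpos[OF at1])
       apply (rule DERIV_subset[OF dU[OF t1ab] sub])
      using U0 pos_before by (auto intro: less_imp_le)
    ultimately show False by simp
  next
    case False
    then have "V t1 \<le> 0" using t1Z unfolding Z_def by auto
    then have V0: "V t1 = 0" using Vt1 by simp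
    then have vt: "v t1 = - E t1" unfolding V_def by simp
    have ut: "min 0 (u t1) \<ge> - E t1" using Ut1 Epos[of t1] unfolding U_def by simp
    have "v' t1 \<ge> K * (min 0 (u t1) + min 0 (v t1))"
    proof -
      have "v t1 < 0" using vt Epos[of t1] by simp
      then show ?thesis using hv t1ab by blast
    qed
    also have "K * (min 0 (u t1) + min 0 (v t1)) \<ge> K * (- E t1 - E t1)"
      using ut vt Epos[of t1] K by (intro mult_left_mono) auto
    finally have "v' t1 + (2*K+1) * E t1 > 0" using Epos[of t1] by (simp add: algebra_simps)
    moreover have "v' t1 + (2*K+1) * E t1 \<le> 0"
      apply (rule left_deriv_nonpos[OF at1])
       apply (rule DERIV_subset[OF dV[OF t1ab] sub])
      using V0 pos_before by (auto intro: less_imp_le)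
    ultimately show False by simp
  qed
qed

lemma pos_pair:
  fixes u v u' v' :: "real \<Rightarrow> real"
  assumes ab: "a \<le> b" and K: "K \<ge> 0"
    and du: "\<forall>\<tau>\<in>{a..b}. (u has_real_derivative u' \<tau>) (at \<tau> within {a..b})"
    and dv: "\<forall>\<tau>\<in>{a..b}. (v has_real_derivative v' \<tau>) (at \<tau> within {a..b})"
    and u0: "u a \<ge> 0" and v0: "v a \<ge> 0"
    and hu: "\<forall>\<tau>\<in>{a..b}. u \<tau> < 0 \<longrightarrow> u' \<tau> \<ge> K * (min 0 (u \<tau>) + min 0 (v \<tau>))"
    and hv: "\<forall>\<tau>\<in>{a..b}. v \<tau> < 0 \<longrightarrow> v' \<tau> \<ge> K * (min 0 (u \<tau>) + min 0 (v \<tau>))"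
  shows "\<forall>\<tau>\<in>{a..b}. u \<tau> \<ge> 0 \<and> v \<tau> \<ge> 0"
proof (intro ballI conjI)
  fix \<tau> assume t: "\<tau> \<in> {a..b}"
  define X where "X = exp ((2*K+1) * (\<tau> - a))"
  have X: "X > 0" unfolding X_def by simp
  show "u \<tau> \<ge> 0"
  proof (rule ccontr)
    assume "\<not> u \<tau> \<ge> 0"
    then have "- u \<tau> / X > 0" using X by (intro divide_pos_pos) auto
    from pos_pair_core[OF ab K this du dv u0 v0 hu hv] t
    have "u \<tau> + (- u \<tau> / X) * X > 0" unfolding X_def by blast
    then show False using X by simp
  qed
  show "v \<tau> \<ge> 0"
  proof (rule ccontr)
    assume "\<not> v \<tau> \<ge> 0"
    then have "- v \<tau> / X > 0" using X by (intro divide_pos_pos) auto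
    from pos_pair_core[OF ab K this du dv u0 v0 hu hv] t
    have "v \<tau> + (- v \<tau> / X) * X > 0" unfolding X_def by blast
    then show False using X by simp
  qed
qed


lemma eig_mem_iff:
  "z \<in> eigenvalues2 (a11, a12, a21, a22) \<longleftrightarrow>
    (complex_of_real a11 - z) * (complex_of_real a22 - z) - complex_of_real a12 * complex_of_real a21 = 0"
  by (simp add: eigenvalues2_def)

lemma eig_parts:
  assumes "z \<in> eigenvalues2 (a11, a12, a21, a22)"
  shows "(a11 - Re z) * (a22 - Re z) - (Im z)^2 - a12 * a21 = 0"
    and "Im z * (2 * Re z - (a11 + a22)) = 0"
proof -
  have eq: "(complex_of_real a11 - z) * (complex_of_real a22 - z) - complex_of_real a12 * complex_of_real a21 = 0"
    using assms by (simp add: eigenvalues2_def)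
  have "Re ((complex_of_real a11 - z) * (complex_of_real a22 - z) - complex_of_real a12 * complex_of_real a21) = 0"
    using eq by simp
  then show "(a11 - Re z) * (a22 - Re z) - (Im z)^2 - a12 * a21 = 0"
    by (simp add: power2_eq_square algebra_simps)
  have "Im ((complex_of_real a11 - z) * (complex_of_real a22 - z) - complex_of_real a12 * complex_of_real a21) = 0"
    using eq by simp
  then show "Im z * (2 * Re z - (a11 + a22)) = 0"
    by (simp add: algebra_simps)
qed

lemma eig_real_im:
  assumes "z \<in> eigenvalues2 (a11, a12, a21, a22)"
    and disc: "(a11 + a22)^2 - 4 * (a11 * a22 - a12 * a21) \<ge> 0"
  shows "Im z = 0"
proof (rule ccontr)
  assume ne: "Im z \<noteq> 0"
  from eig_parts(2)[OF assms(1)] ne have x: "Re z = (a11 + a22) / 2" by simp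
  from eig_parts(1)[OF assms(1)] x
  have "(Im z)^2 = (a11 * a22 - a12 * a21) - (a11 + a22)^2 / 4"
    by (simp add: power2_eq_square field_simps)
  moreover have "(Im z)^2 > 0" using ne by simp
  ultimately show False using disc by simp
qed

lemma eig_node:
  assumes disc: "(a11 + a22)^2 - 4 * (a11 * a22 - a12 * a21) \<ge> 0"
    and tr: "a11 + a22 < 0" and det: "a11 * a22 - a12 * a21 > 0"
  shows "\<forall>z\<in>eigenvalues2 (a11, a12, a21, a22). Im z = 0 \<and> Re z < 0"
proof
  fix z assume z: "z \<in> eigenvalues2 (a11, a12, a21, a22)"
  have im: "Im z = 0" by (rule eig_real_im[OF z disc])
  have eq: "(a11 - Re z) * (a22 - Re z) - a12 * a21 = 0" using eig_parts(1)[OF z] im by simp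
  have "Re z < 0"
  proof (rule ccontr)
    assume "\<not> Re z < 0"
    then have "Re z \<ge> 0" by simp
    moreover have "(a11 - Re z) * (a22 - Re z) - a12 * a21 = (Re z)^2 - (a11 + a22) * Re z + (a11 * a22 - a12 * a21)"
      by (simp add: power2_eq_square algebra_simps)
    ultimately have "(a11 - Re z) * (a22 - Re z) - a12 * a21 > 0"
      using tr det by (smt (verit) mult_nonneg_nonneg mult_nonpos_nonneg zero_le_power2)
    then show False using eq by simp
  qed
  then show "Im z = 0 \<and> Re z < 0" using im by simp
qed

lemma eig_saddle:
  assumes det: "a11 * a22 - a12 * a21 < 0"
  shows "(\<forall>z\<in>eigenvalues2 (a11, a12, a21, a22). Im z = 0 \<and> Re z \<noteq> 0)
    \<and> (\<exists>z\<in>eigenvalues2 (a11, a12, a21, a22). Re z < 0)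
    \<and> (\<exists>z\<in>eigenvalues2 (a11, a12, a21, a22). Re z > 0)"
proof (intro conjI)
  have disc0: "(a11 + a22)^2 - 4 * (a11 * a22 - a12 * a21) \<ge> 0" using det by (smt (verit) zero_le_power2)
  define t where "t = a11 + a22"
  define d where "d = a11 * a22 - a12 * a21"
  have disc: "t^2 - 4 * d \<ge> 0" using det unfolding d_def by (smt (verit) zero_le_power2)
  show "\<forall>z\<in>eigenvalues2 (a11, a12, a21, a22). Im z = 0 \<and> Re z \<noteq> 0"
  proof
    fix z assume z: "z \<in> eigenvalues2 (a11, a12, a21, a22)"
    have im: "Im z = 0" by (rule eig_real_im[OF z disc0])
    have eq: "(a11 - Re z) * (a22 - Re z) - a12 * a21 = 0" using eig_parts(1)[OF z] im by simp
    have "Re z \<noteq> 0"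
    proof
      assume "Re z = 0" then show False using eq det by simp
    qed
    then show "Im z = 0 \<and> Re z \<noteq> 0" using im by simp
  qed
  define r where "r = sqrt (t^2 - 4 * d)"
  have r2: "r^2 = t^2 - 4 * d" unfolding r_def using disc by simp
  have rge: "r \<ge> 0" unfolding r_def using disc by simp
  have rt: "r > \<bar>t\<bar>"
  proof -
    have "r^2 > \<bar>t\<bar>^2" using r2 det unfolding d_def by simp
    then show ?thesis using rge by (meson abs_ge_zero power_less_imp_less_base)
  qed
  have root: "complex_of_real x \<in> eigenvalues2 (a11, a12, a21, a22)" if "x^2 - t * x + d = 0" for x
  proof -
    have "(a11 - x) * (a22 - x) - a12 * a21 = 0"
      using that unfolding t_def d_def by (simp add: power2_eq_square algebra_simps)
    then have "complex_of_real ((a11 - x) * (a22 - x) - a12 * a21) = 0" by simp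
    then show ?thesis by (simp add: eigenvalues2_def)
  qed
  have r1: "((t - r)/2)^2 - t * ((t - r)/2) + d = 0"
    using r2 by (simp add: power2_eq_square field_simps)
  have r2': "((t + r)/2)^2 - t * ((t + r)/2) + d = 0"
    using r2 by (simp add: power2_eq_square field_simps)
  show "\<exists>z\<in>eigenvalues2 (a11, a12, a21, a22). Re z < 0"
    using root[OF r1] rt by (intro bexI[of _ "complex_of_real ((t - r)/2)"]) auto
  show "\<exists>z\<in>eigenvalues2 (a11, a12, a21, a22). Re z > 0"
    using root[OF r2'] rt by (intro bexI[of _ "complex_of_real ((t + r)/2)"]) auto
qed


lemma mm_field_eq:
  "mm_field k0 k1 km1 k2 eT p =
    (k0 - k1 * (eT - snd p) * fst p + km1 * snd p, k1 * (eT - snd p) * fst p - (km1 + k2) * snd p)"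
  by (cases p) (simp add: mm_field_def)

lemma mm_zero_iff:
  "mm_field k0 k1 km1 k2 eT p = 0 \<longleftrightarrow>
     k2 * snd p = k0 \<and> k1 * (eT - snd p) * fst p = (km1 + k2) * snd p"
  unfolding mm_field_eq zero_prod_def by (auto simp: algebra_simps)

lemma stat_unique:
  assumes "k1 \<noteq> 0" "k2 \<noteq> 0" "k2 * eT - k0 \<noteq> 0"
  shows "{p. mm_field k0 k1 km1 k2 eT p = 0} =
     {((km1 + k2) * k0 / (k1 * (k2 * eT - k0)), k0 / k2)}"
proof -
  have D: "eT - k0 / k2 \<noteq> 0" using assms by (simp add: field_simps)
  have eq: "eT - k0 / k2 = (k2 * eT - k0) / k2" using assms by (simp add: field_simps)
  show ?thesis
  proof (intro set_eqI iffI)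
    fix p assume "p \<in> {p. mm_field k0 k1 km1 k2 eT p = 0}"
    then have h: "k2 * snd p = k0" "k1 * (eT - snd p) * fst p = (km1 + k2) * snd p"
      by (auto simp: mm_zero_iff)
    have c: "snd p = k0 / k2" using h(1) assms by (simp add: field_simps)
    have nz: "k1 * (eT - snd p) \<noteq> 0" using assms D c by simp
    have "fst p = (km1 + k2) * snd p / (k1 * (eT - snd p))"
      using h(2) nz by (simp add: eq_divide_eq mult.commute)
    also have "\<dots> = (km1 + k2) * k0 / (k1 * (k2 * eT - k0))"
      unfolding c eq using assms by (simp add: field_simps)
    finally show "p \<in> {((km1 + k2) * k0 / (k1 * (k2 * eT - k0)), k0 / k2)}"
      using c by (cases p) simp
  next
    fix p assume "p \<in> {((km1 + k2) * k0 / (k1 * (k2 * eT - k0)), k0 / k2)}"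
    then show "p \<in> {p. mm_field k0 k1 km1 k2 eT p = 0}"
      using assms eq by (auto simp: mm_zero_iff field_simps)
  qed
qed

lemma stat_infinite:
  assumes "(k0 = 0 \<and> k1 = 0) \<or> (k0 = 0 \<and> eT = 0) \<or> (k0 = 0 \<and> k2 = 0)"
  shows "infinite {p. mm_field k0 k1 km1 k2 eT p = 0}"
proof (cases "k0 = 0 \<and> (k1 = 0 \<or> eT = 0)")
  case True
  have sub: "range (\<lambda>s::real. (s, 0::real)) \<subseteq> {p. mm_field k0 k1 km1 k2 eT p = 0}"
    using True by (auto simp: mm_zero_iff)
  have "infinite (range (\<lambda>s::real. (s, 0::real)))"
    using finite_imageD[of "\<lambda>s::real. (s, 0::real)" UNIV] infinite_UNIV_char_0
    by (auto simp: inj_on_def)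
  then show ?thesis using sub finite_subset by blast
next
  case False
  then have h: "k0 = 0" "k2 = 0" "k1 \<noteq> 0" using assms by auto
  define g where "g = (\<lambda>c::real. (km1 * c / (k1 * (eT - c)), c))"
  have sub: "g ` {eT+1..eT+2} \<subseteq> {p. mm_field k0 k1 km1 k2 eT p = 0}"
    using h by (auto simp: mm_zero_iff g_def field_simps)
  have inj: "inj_on g {eT+1..eT+2}" unfolding g_def by (auto simp: inj_on_def)
  have "infinite {eT+1..eT+2::real}" by (rule infinite_Icc) simp
  then have "infinite (g ` {eT+1..eT+2})" using inj finite_imageD by blast
  then show ?thesis using sub finite_subset by blast
qed

lemma stat_empty:
  assumes "k0 \<ge> 0" "k1 \<ge> 0" "km1 \<ge> 0" "k2 \<ge> 0" "eT \<ge> 0"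
    and "\<not> (k1 \<noteq> 0 \<and> k2 \<noteq> 0 \<and> k2 * eT - k0 \<noteq> 0)"
    and "\<not> ((k0 = 0 \<and> k1 = 0) \<or> (k0 = 0 \<and> eT = 0) \<or> (k0 = 0 \<and> k2 = 0))"
  shows "{p. mm_field k0 k1 km1 k2 eT p = 0} = {}"
proof (rule ccontr)
  assume "{p. mm_field k0 k1 km1 k2 eT p = 0} \<noteq> {}"
  then obtain s c where h: "k2 * c = k0" "k1 * (eT - c) * s = (km1 + k2) * c"
    by (auto simp: mm_zero_iff)
  show False
  proof (cases "k2 = 0")
    case True
    then show ?thesis using h assms by auto
  next
    case k2: False
    then have c: "c = k0 / k2" using h by (simp add: field_simps)
    show ?thesis
    proof (cases "k1 = 0")
      case True
      then have "(km1 + k2) * c = 0" using h by simp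
      then have "c = 0" using k2 assms by (smt (verit) mult_eq_0_iff)
      then have "k0 = 0" using h by simp
      then show ?thesis using assms True by auto
    next
      case k1: False
      then have D: "k2 * eT - k0 = 0" using assms k2 by auto
      then have "eT * k2 = c * k2" using h(1) by (simp add: algebra_simps)
      then have "eT = c" using k2 by simp
      then have "(km1 + k2) * c = 0" using h by simp
      then have "c = 0" using k2 assms by (smt (verit) mult_eq_0_iff)
      then show ?thesis using assms \<open>eT = c\<close> h by auto
    qed
  qed
qed

definition mmJ :: "real \<Rightarrow> real \<Rightarrow> real \<Rightarrow> real \<Rightarrow> real \<Rightarrow> real \<times> real \<Rightarrow> real \<times> real \<Rightarrow> real \<times> real" where
  "mmJ k0 k1 km1 k2 eT p = (\<lambda>h. (- k1 * (eT - snd p) * fst h + (k1 * fst p + km1) * snd h,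
       k1 * (eT - snd p) * fst h - (k1 * fst p + km1 + k2) * snd h))"

lemma mm_has_derivative:
  "(mm_field k0 k1 km1 k2 eT has_derivative mmJ k0 k1 km1 k2 eT p) (at p)"
proof -
  have e: "mm_field k0 k1 km1 k2 eT = (\<lambda>p. (k0 - k1 * (eT - snd p) * fst p + km1 * snd p,
      k1 * (eT - snd p) * fst p - (km1 + k2) * snd p))"
    by (rule ext) (simp add: mm_field_eq)
  show ?thesis unfolding e mmJ_def
    by (auto intro!: derivative_eq_intros simp: algebra_simps fun_eq_iff)
qed

lemma mm_jacobian:
  "jacobian2 (mm_field k0 k1 km1 k2 eT) p =
     (- k1 * (eT - snd p), k1 * fst p + km1, k1 * (eT - snd p), - (k1 * fst p + km1 + k2))"
proof -
  have "(SOME L. (mm_field k0 k1 km1 k2 eT has_derivative L) (at p)) = mmJ k0 k1 km1 k2 eT p"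
    using mm_has_derivative has_derivative_unique
    by (metis (mono_tags, lifting) someI_ex)
  then show ?thesis unfolding jacobian2_def Let_def by (simp add: mmJ_def)
qed


lemma P0_props:
  fixes k0 k1 km1 k2 eT :: real
  assumes nn: "k0 \<ge> 0" "k1 \<ge> 0" "km1 \<ge> 0" "k2 \<ge> 0" "eT \<ge> 0"
    and nz: "k1 \<noteq> 0" "k2 \<noteq> 0" "k2 * eT - k0 \<noteq> 0"
  defines "P \<equiv> ((km1 + k2) * k0 / (k1 * (k2 * eT - k0)), k0 / k2)"
  shows "(P \<in> first_quadrant \<longleftrightarrow> k2 * eT - k0 > 0)
      \<and> (k2 * eT - k0 > 0 \<longrightarrow> attracting_node (mm_field k0 k1 km1 k2 eT) P)
      \<and> (P \<in> second_quadrant \<longleftrightarrow> k2 * eT - k0 < 0)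
      \<and> (k2 * eT - k0 < 0 \<longrightarrow> saddle_point (mm_field k0 k1 km1 k2 eT) P)"
proof -
  define D where "D = k2 * eT - k0"
  have k1p: "k1 > 0" and k2p: "k2 > 0" using nn nz by auto
  have c0: "snd P \<ge> 0" unfolding P_def using nn k2p by simp
  have sD: "fst P = (km1 + k2) * k0 / (k1 * D)" unfolding P_def D_def by simp
  have Dpos_s: "fst P \<ge> 0" if "D > 0"
    using that nn k1p sD by simp
  have Dneg: "k0 > 0" if "D < 0" using that nn k2p unfolding D_def
    by (smt (verit) mult_nonneg_nonneg)
  have Dneg_s: "fst P < 0" if "D < 0"
  proof -
    have "(km1 + k2) * k0 > 0" using Dneg[OF that] k2p nn by simp
    moreover have "k1 * D < 0" using that k1p by (simp add: mult_pos_neg)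
    ultimately show ?thesis unfolding sD by (simp add: divide_pos_neg)
  qed
  have Dneg_c: "snd P > 0" if "D < 0" unfolding P_def using Dneg[OF that] k2p by simp
  have zero: "mm_field k0 k1 km1 k2 eT P = 0"
    using stat_unique[OF nz, of km1] unfolding P_def by blast
  have diff: "mm_field k0 k1 km1 k2 eT differentiable (at P)"
    using mm_has_derivative unfolding differentiable_def by blast
  define a where "a = k1 * (eT - snd P)"
  define b where "b = k1 * fst P + km1"
  have aD: "a = k1 * D / k2" unfolding a_def D_def P_def using k2p by (simp add: field_simps)
  have J: "jacobian2 (mm_field k0 k1 km1 k2 eT) P = (- a, b, a, - (b + k2))"
    unfolding mm_jacobian a_def b_def by simp
  have detJ: "(- a) * (- (b + k2)) - b * a = a * k2" by (simp add: algebra_simps)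
  show ?thesis
  proof (intro conjI impI)
    show "(P \<in> first_quadrant) = (k2 * eT - k0 > 0)"
      using Dpos_s Dneg_s c0 nz(3) unfolding first_quadrant_def D_def
      by (cases "k2 * eT - k0 > 0") auto
    show "(P \<in> second_quadrant) = (k2 * eT - k0 < 0)"
      using Dpos_s Dneg_s Dneg_c nz(3) unfolding second_quadrant_def D_def
      by (cases "k2 * eT - k0 > 0") auto
  next
    assume "k2 * eT - k0 > 0"
    then have Dp: "D > 0" unfolding D_def by simp
    have ap: "a > 0" unfolding aD using Dp k1p k2p by simp
    have bn: "b \<ge> 0" unfolding b_def using Dpos_s[OF Dp] k1p nn by simp
    have "\<forall>z\<in>eigenvalues2 (- a, b, a, - (b + k2)). Im z = 0 \<and> Re z < 0"
    proof (rule eig_node)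
      have "(- a + - (b + k2))^2 - 4 * ((- a) * (- (b + k2)) - b * a) = (a - k2)^2 + b^2 + 2*a*b + 2*b*k2"
        by (simp add: power2_eq_square algebra_simps)
      also have "\<dots> \<ge> 0" using ap bn k2p by simp
      finally show "(- a + - (b + k2))^2 - 4 * ((- a) * (- (b + k2)) - b * a) \<ge> 0" .
      show "- a + - (b + k2) < 0" using ap bn k2p by simp
      show "(- a) * (- (b + k2)) - b * a > 0" unfolding detJ using ap k2p by simp
    qed
    then show "attracting_node (mm_field k0 k1 km1 k2 eT) P"
      unfolding attracting_node_def J using zero diff by simp
  next
    assume "k2 * eT - k0 < 0"
    then have Dn: "D < 0" unfolding D_def by simp
    have an: "a < 0" unfolding aD using Dn k1p k2p by (simp add: divide_neg_pos mult_pos_neg)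
    have "(- a) * (- (b + k2)) - b * a < 0" unfolding detJ using an k2p by (simp add: mult_neg_pos)
    from eig_saddle[OF this]
    show "saddle_point (mm_field k0 k1 km1 k2 eT) P"
      unfolding saddle_point_def J using zero diff by simp
  qed
qed


lemma sol_restrict:
  assumes "is_solution F I x" "0 \<in> I" "t \<in> I" "0 \<le> t"
  shows "\<forall>\<tau>\<in>{0..t}. (x has_vector_derivative F (x \<tau>)) (at \<tau> within {0..t})"
    and "{0..t} \<subseteq> I"
proof -
  have iv: "is_interval I" and d: "\<forall>\<tau>\<in>I. (x has_vector_derivative F (x \<tau>)) (at \<tau> within I)"
    using assms(1) unfolding is_solution_def by simp_all
  have iv1: "\<forall>a\<in>I. \<forall>b\<in>I. \<forall>y. a \<le> y \<and> y \<le> b \<longrightarrow> y \<in> I"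
    using iv unfolding is_interval_1 by blast
  show sub: "{0..t} \<subseteq> I"
  proof
    fix y assume "y \<in> {0..t}"
    then have "0 \<le> y" "y \<le> t" by auto
    then show "y \<in> I" using iv1 assms(2,3) by blast
  qed
  show "\<forall>\<tau>\<in>{0..t}. (x has_vector_derivative F (x \<tau>)) (at \<tau> within {0..t})"
  proof
    fix \<tau> assume "\<tau> \<in> {0..t}"
    then have "\<tau> \<in> I" by (rule subsetD[OF sub])
    then have "(x has_vector_derivative F (x \<tau>)) (at \<tau> within I)" using d by simp
    then show "(x has_vector_derivative F (x \<tau>)) (at \<tau> within {0..t})"
      by (rule has_vector_derivative_within_subset[OF _ sub])
  qed
qed

lemma bound_on_compact:
  fixes x :: "real \<Rightarrow> real \<times> real"
  assumes "continuous_on {a..b} x"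
  obtains B where "B \<ge> 0" "\<forall>\<tau>\<in>{a..b}. \<bar>fst (x \<tau>)\<bar> \<le> B \<and> \<bar>snd (x \<tau>)\<bar> \<le> B"
proof -
  have "compact (x ` {a..b})" by (rule compact_continuous_image[OF assms compact_Icc])
  then have "bounded (x ` {a..b})" by (rule compact_imp_bounded)
  then obtain B where B: "\<forall>y\<in>x ` {a..b}. norm y \<le> B"
    unfolding bounded_iff by (elim exE) simp
  have "\<forall>\<tau>\<in>{a..b}. \<bar>fst (x \<tau>)\<bar> \<le> max B 0 \<and> \<bar>snd (x \<tau>)\<bar> \<le> max B 0"
  proof
    fix \<tau> assume "\<tau> \<in> {a..b}"
    then have "norm (x \<tau>) \<le> B" using B by auto
    moreover have "norm (fst (x \<tau>)) \<le> norm (x \<tau>)" "norm (snd (x \<tau>)) \<le> norm (x \<tau>)"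
      by (metis prod.collapse norm_fst_le, metis prod.collapse norm_snd_le)
    moreover have "\<bar>fst (x \<tau>)\<bar> = norm (fst (x \<tau>))" "\<bar>snd (x \<tau>)\<bar> = norm (snd (x \<tau>))" by simp_all
    ultimately show "\<bar>fst (x \<tau>)\<bar> \<le> max B 0 \<and> \<bar>snd (x \<tau>)\<bar> \<le> max B 0" by linarith
  qed
  then show ?thesis using that[of "max B 0"] by simp
qed

lemma invariant_Q:
  fixes k0 k1 km1 k2 eT :: real
  assumes nn: "k0 \<ge> 0" "k1 \<ge> 0" "km1 \<ge> 0" "k2 \<ge> 0" "eT \<ge> 0"
    and sol: "is_solution (mm_field k0 k1 km1 k2 eT) I x" and I0: "0 \<in> I"
    and x0: "x 0 \<in> first_quadrant" and tI: "t \<in> I" and t0: "t \<ge> 0"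
  shows "x t \<in> first_quadrant"
proof -
  let ?F = "mm_field k0 k1 km1 k2 eT"
  have d: "\<forall>\<tau>\<in>{0..t}. (x has_vector_derivative ?F (x \<tau>)) (at \<tau> within {0..t})"
    using sol_restrict[OF sol I0 tI t0] by blast
  have cont: "continuous_on {0..t} x"
    by (rule continuous_on_vector_derivative) (use d in auto)
  obtain B where B0: "B \<ge> 0" and B: "\<forall>\<tau>\<in>{0..t}. \<bar>fst (x \<tau>)\<bar> \<le> B \<and> \<bar>snd (x \<tau>)\<bar> \<le> B"
    using bound_on_compact[OF cont] by blast
  define K where "K = k1 * (eT + B) + km1 + k2"
  have K0: "K \<ge> 0" unfolding K_def using nn B0 by simp
  define u where "u = (\<lambda>\<tau>. fst (x \<tau>))"
  define v where "v = (\<lambda>\<tau>. snd (x \<tau>))"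
  define u' where "u' = (\<lambda>\<tau>. fst (?F (x \<tau>)))"
  define v' where "v' = (\<lambda>\<tau>. snd (?F (x \<tau>)))"
  have du: "\<forall>\<tau>\<in>{0..t}. (u has_real_derivative u' \<tau>) (at \<tau> within {0..t})"
    unfolding u_def u'_def using d vd_fst by blast
  have dv: "\<forall>\<tau>\<in>{0..t}. (v has_real_derivative v' \<tau>) (at \<tau> within {0..t})"
    unfolding v_def v'_def using d vd_snd by blast
  have u'eq: "u' \<tau> = k0 + km1 * v \<tau> - k1 * (eT - v \<tau>) * u \<tau>" for \<tau>
    unfolding u'_def u_def v_def by (simp add: mm_field_eq)
  have v'eq: "v' \<tau> = k1 * eT * u \<tau> - (k1 * u \<tau> + km1 + k2) * v \<tau>" for \<tau>
    unfolding v'_def u_def v_def by (simp add: mm_field_eq algebra_simps)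
  have hu: "\<forall>\<tau>\<in>{0..t}. u \<tau> < 0 \<longrightarrow> u' \<tau> \<ge> K * (min 0 (u \<tau>) + min 0 (v \<tau>))"
  proof (intro ballI impI)
    fix \<tau> assume t: "\<tau> \<in> {0..t}" and neg: "u \<tau> < 0"
    have vb: "\<bar>v \<tau>\<bar> \<le> B" using B t unfolding v_def by auto
    define X where "X = k1 * (eT - v \<tau>)"
    have e1: "\<bar>eT - v \<tau>\<bar> \<le> eT + B" using vb nn by linarith
    have "\<bar>X\<bar> = k1 * \<bar>eT - v \<tau>\<bar>" unfolding X_def using nn by (simp add: abs_mult)
    also have "\<dots> \<le> k1 * (eT + B)" using mult_left_mono[OF e1, of k1] nn by simp
    finally have "\<bar>X\<bar> \<le> k1 * (eT + B)" .
    then have XK: "X + K \<ge> 0" unfolding K_def using nn by simp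
    have a1: "- X * u \<tau> \<ge> K * u \<tau>"
      using mult_nonneg_nonneg[OF XK, of "- u \<tau>"] neg by (simp add: algebra_simps)
    have a2: "km1 * v \<tau> \<ge> K * min 0 (v \<tau>)"
    proof -
      have "km1 * v \<tau> \<ge> km1 * min 0 (v \<tau>)" using nn by (simp add: mult_left_mono)
      moreover have "km1 * min 0 (v \<tau>) \<ge> K * min 0 (v \<tau>)"
        unfolding K_def using nn B0 by (intro mult_right_mono_neg) auto
      ultimately show ?thesis by simp
    qed
    show "u' \<tau> \<ge> K * (min 0 (u \<tau>) + min 0 (v \<tau>))"
      using a1 a2 neg nn unfolding u'eq X_def by (simp add: algebra_simps)
  qed
  have hv: "\<forall>\<tau>\<in>{0..t}. v \<tau> < 0 \<longrightarrow> v' \<tau> \<ge> K * (min 0 (u \<tau>) + min 0 (v \<tau>))"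
  proof (intro ballI impI)
    fix \<tau> assume t: "\<tau> \<in> {0..t}" and neg: "v \<tau> < 0"
    have ub: "\<bar>u \<tau>\<bar> \<le> B" using B t unfolding u_def by auto
    define Y where "Y = k1 * u \<tau> + km1 + k2"
    have "\<bar>k1 * u \<tau>\<bar> = k1 * \<bar>u \<tau>\<bar>" using nn by (simp add: abs_mult)
    also have "\<dots> \<le> k1 * B" using mult_left_mono[OF ub, of k1] nn by simp
    finally have "\<bar>k1 * u \<tau>\<bar> \<le> k1 * B" .
    then have "k1 * u \<tau> \<ge> - (k1 * B)" by linarith
    moreover have "k1 * eT \<ge> 0" using nn by simp
    moreover have "K = k1 * eT + k1 * B + km1 + k2" unfolding K_def by (simp add: algebra_simps)
    ultimately have YK: "Y + K \<ge> 0" unfolding Y_def using nn B0 by linarith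
    have a1: "- Y * v \<tau> \<ge> K * v \<tau>"
      using mult_nonneg_nonneg[OF YK, of "- v \<tau>"] neg by (simp add: algebra_simps)
    have a2: "k1 * eT * u \<tau> \<ge> K * min 0 (u \<tau>)"
    proof -
      have "k1 * eT * u \<tau> \<ge> k1 * eT * min 0 (u \<tau>)" using nn by (simp add: mult_left_mono)
      moreover have "k1 * eT * min 0 (u \<tau>) \<ge> K * min 0 (u \<tau>)"
        unfolding K_def using nn B0 by (intro mult_right_mono_neg) (auto simp: algebra_simps)
      ultimately show ?thesis by simp
    qed
    show "v' \<tau> \<ge> K * (min 0 (u \<tau>) + min 0 (v \<tau>))"
      using a1 a2 neg unfolding v'eq Y_def by (simp add: algebra_simps)
  qed
  have "u 0 \<ge> 0" "v 0 \<ge> 0" using x0 unfolding first_quadrant_def u_def v_def by auto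
  from pos_pair[OF t0 K0 du dv this hu hv] have "u t \<ge> 0 \<and> v t \<ge> 0" using t0 by auto
  then show ?thesis unfolding first_quadrant_def u_def v_def by auto
qed


lemma invariant_QeT:
  fixes k0 k1 km1 k2 eT :: real
  assumes nn: "k0 \<ge> 0" "k1 \<ge> 0" "km1 \<ge> 0" "k2 \<ge> 0" "eT \<ge> 0"
    and sol: "is_solution (mm_field k0 k1 km1 k2 eT) I x" and I0: "0 \<in> I"
    and x0: "x 0 \<in> first_quadrant" and c0: "snd (x 0) \<le> eT" and tI: "t \<in> I" and t0: "t \<ge> 0"
  shows "x t \<in> first_quadrant \<and> snd (x t) \<le> eT"
proof -
  let ?F = "mm_field k0 k1 km1 k2 eT"
  have d: "\<forall>\<tau>\<in>{0..t}. (x has_vector_derivative ?F (x \<tau>)) (at \<tau> within {0..t})"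
    and sub: "{0..t} \<subseteq> I"
    using sol_restrict[OF sol I0 tI t0] by (blast, blast)
  have Q: "x \<tau> \<in> first_quadrant" if "\<tau> \<in> {0..t}" for \<tau>
  proof -
    have "\<tau> \<in> I" "\<tau> \<ge> 0" using that sub by auto
    then show ?thesis by (rule invariant_Q[OF nn sol I0 x0])
  qed
  define u where "u = (\<lambda>\<tau>. eT - snd (x \<tau>))"
  define u' where "u' = (\<lambda>\<tau>. - snd (?F (x \<tau>)))"
  have du: "\<forall>\<tau>\<in>{0..t}. (u has_real_derivative u' \<tau>) (at \<tau> within {0..t})"
  proof
    fix \<tau> assume "\<tau> \<in> {0..t}"
    then have "((\<lambda>\<tau>. snd (x \<tau>)) has_real_derivative snd (?F (x \<tau>))) (at \<tau> within {0..t})"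
      using d vd_snd by blast
    from DERIV_diff[OF DERIV_const this, of eT]
    show "(u has_real_derivative u' \<tau>) (at \<tau> within {0..t})"
      unfolding u_def u'_def by simp
  qed
  have u'eq: "u' \<tau> = (km1 + k2) * eT - (k1 * fst (x \<tau>) + km1 + k2) * u \<tau>" for \<tau>
    unfolding u'_def u_def by (simp add: mm_field_eq algebra_simps)
  have hu: "\<forall>\<tau>\<in>{0..t}. u \<tau> < 0 \<longrightarrow> u' \<tau> \<ge> 0 * (min 0 (u \<tau>) + min 0 (u \<tau>))"
  proof (intro ballI impI)
    fix \<tau> assume t: "\<tau> \<in> {0..t}" and neg: "u \<tau> < 0"
    have "fst (x \<tau>) \<ge> 0" using Q[OF t] unfolding first_quadrant_def by auto
    then have "k1 * fst (x \<tau>) + km1 + k2 \<ge> 0" using nn by simp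
    then have "- ((k1 * fst (x \<tau>) + km1 + k2) * u \<tau>) \<ge> 0"
      using neg by (simp add: mult_nonneg_nonpos)
    moreover have "(km1 + k2) * eT \<ge> 0" using nn by simp
    ultimately show "u' \<tau> \<ge> 0 * (min 0 (u \<tau>) + min 0 (u \<tau>))" unfolding u'eq by simp
  qed
  have "u 0 \<ge> 0" using c0 unfolding u_def by simp
  from pos_pair[OF t0 order_refl du du this this hu hu] have "u t \<ge> 0" using t0 by auto
  then show ?thesis using Q[of t] t0 unfolding u_def by auto
qed


lemma sol_at_pos:
  assumes "is_solution F {0..} x" "t > 0"
  shows "(x has_vector_derivative F (x t)) (at t)"
proof -
  have "(x has_vector_derivative F (x t)) (at t within {0..})"
    using assms unfolding is_solution_def by simp
  then have "(x has_vector_derivative F (x t)) (at t within {0<..})"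
    by (rule has_vector_derivative_within_subset) auto
  then show ?thesis using at_within_open[of t "{0<..}"] assms(2) by simp
qed

lemma enter_eT:
  fixes k0 k1 km1 k2 eT :: real
  assumes nn: "k0 \<ge> 0" "k1 \<ge> 0" "km1 \<ge> 0" "k2 \<ge> 0" "eT \<ge> 0"
    and g: "km1 + k2 > 0" and eT: "eT > 0"
    and sol: "is_solution (mm_field k0 k1 km1 k2 eT) {0..} x" and x0: "x 0 \<in> first_quadrant"
  shows "\<exists>t>0. snd (x t) \<le> eT"
proof (rule ccontr)
  assume "\<not> ?thesis"
  then have big: "\<forall>t>0. snd (x t) > eT" by auto
  let ?F = "mm_field k0 k1 km1 k2 eT"
  define \<gamma> where "\<gamma> = km1 + k2"
  define h where "h = (\<lambda>t. snd (x t) + \<gamma> * eT * t)"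
  have dh: "\<exists>y. DERIV h t :> y \<and> y \<le> 0" if "t > 0" for t
  proof -
    have "((\<lambda>t. snd (x t)) has_real_derivative snd (?F (x t))) (at t)"
      using vd_snd[OF sol_at_pos[OF sol that]] .
    then have d: "DERIV h t :> snd (?F (x t)) + \<gamma> * eT"
      unfolding h_def by (auto intro!: derivative_eq_intros)
    have "x t \<in> first_quadrant"
      using invariant_Q[OF nn sol _ x0, of t] that by auto
    then have s: "fst (x t) \<ge> 0" unfolding first_quadrant_def by simp
    have c: "snd (x t) > eT" using big that by simp
    have "k1 * (eT - snd (x t)) * fst (x t) \<le> 0"
      using s c nn by (simp add: mult_nonpos_nonneg mult_nonneg_nonpos)
    moreover have "\<gamma> * snd (x t) \<ge> \<gamma> * eT" using c g unfolding \<gamma>_def by simp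
    ultimately have "snd (?F (x t)) + \<gamma> * eT \<le> 0"
      unfolding mm_field_eq \<gamma>_def by simp
    then show ?thesis using d by blast
  qed
  define c1 where "c1 = snd (x 1)"
  define T where "T = 2 + c1 / (\<gamma> * eT)"
  have gp: "\<gamma> * eT > 0" using g eT unfolding \<gamma>_def by simp
  have c1p: "c1 > eT" using big unfolding c1_def by simp
  have T1: "T \<ge> 1" unfolding T_def using gp c1p eT by simp
  have "h T \<le> h 1"
    by (rule DERIV_nonpos_imp_nonincreasing[OF T1]) (use dh in auto)
  then have "snd (x T) \<le> c1 + \<gamma> * eT - \<gamma> * eT * T" unfolding h_def c1_def by simp
  also have "\<gamma> * eT * T = 2 * (\<gamma> * eT) + c1"
  proof -
    have "\<gamma> * eT * T = 2 * (\<gamma> * eT) + (\<gamma> * eT) * (c1 / (\<gamma> * eT))"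
      unfolding T_def by (simp add: algebra_simps)
    also have "(\<gamma> * eT) * (c1 / (\<gamma> * eT)) = c1" using gp eT g unfolding \<gamma>_def by simp
    finally show ?thesis .
  qed
  finally have "snd (x T) \<le> - (\<gamma> * eT)" by simp
  moreover have "snd (x T) > eT" using big T1 by simp
  ultimately show False using gp eT by simp
qed


lemma periodic_nat:
  assumes per: "\<forall>t. f (t + T) = f t"
  shows "f (t + real n * T) = f t"
proof (induction n)
  case 0 then show ?case by simp
next
  case (Suc n)
  have "f (t + real (Suc n) * T) = f ((t + real n * T) + T)" by (simp add: algebra_simps)
  also have "\<dots> = f (t + real n * T)" using per by simp
  finally show ?case using Suc by simp
qed

lemma periodic_nat_minus:
  assumes per: "\<forall>t. f (t + T) = f t"
  shows "f (t - real n * T) = f t"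
  using periodic_nat[OF per, of "t - real n * T" n] by simp

lemma exists_mult_ge:
  fixes T y :: real
  assumes "T > 0"
  shows "\<exists>n::nat. y \<le> real n * T"
proof -
  obtain n :: nat where "y / T < real n" using reals_Archimedean2 by blast
  then have "y < real n * T" using assms by (simp add: field_simps)
  then show ?thesis by (intro exI[of _ n]) simp
qed

lemma noninc_periodic_const:
  fixes h :: "real \<Rightarrow> real"
  assumes mono: "\<forall>a b. a \<le> b \<longrightarrow> h b \<le> h a"
    and per: "\<forall>t. h (t + T) = h t" and T: "T > 0"
  shows "h t = h 0"
proof (cases "t \<ge> 0")
  case True
  obtain n :: nat where n: "t \<le> real n * T" using exists_mult_ge[OF T] by blast
  have "h (0 + real n * T) = h 0" by (rule periodic_nat[OF per])
  then have "h (real n * T) = h 0" by simp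
  moreover have "h (real n * T) \<le> h t" using mono n by blast
  moreover have "h t \<le> h 0" using mono True by blast
  ultimately show ?thesis by simp
next
  case False
  obtain n :: nat where n: "- t \<le> real n * T" using exists_mult_ge[OF T] by blast
  have "h (t + real n * T) = h t" by (rule periodic_nat[OF per])
  moreover have "h 0 \<le> h t" using mono False by simp
  moreover have "h (t + real n * T) \<le> h 0" using mono n by simp
  ultimately show ?thesis by simp
qed

lemma deriv_nonpos_periodic_zero:
  fixes h :: "real \<Rightarrow> real"
  assumes d: "\<And>t. (h has_real_derivative h' t) (at t)" and nonpos: "\<And>t. h' t \<le> 0"
    and per: "\<forall>t. h (t + T) = h t" and T: "T > 0"
  shows "h' t = 0"
proof -
  have mono: "\<forall>a b. a \<le> b \<longrightarrow> h b \<le> h a"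
  proof (intro allI impI)
    fix a b :: real assume "a \<le> b"
    then show "h b \<le> h a"
      by (rule DERIV_nonpos_imp_nonincreasing) (use d nonpos in blast)
  qed
  have c: "h s = h 0" for s by (rule noninc_periodic_const[OF mono per T])
  have "(h has_real_derivative 0) (at t)"
  proof -
    have "((\<lambda>_. h 0) has_real_derivative 0) (at t)" by simp
    moreover have "h = (\<lambda>_. h 0)" using c by auto
    ultimately show ?thesis by simp
  qed
  then show ?thesis using DERIV_unique d by blast
qed

lemma solU:
  assumes "is_solution F UNIV x"
  shows "(x has_vector_derivative F (x t)) (at t)"
  using assms unfolding is_solution_def by simp

lemma const_c_implies_const:
  fixes k0 k1 km1 k2 eT :: real
  assumes sol: "is_solution (mm_field k0 k1 km1 k2 eT) UNIV x"
    and per: "\<forall>t. x (t + T) = x t" and T: "T > 0"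
    and cc: "\<forall>t. snd (x t) = snd (x 0)"
  shows "\<forall>t. x t = x 0"
proof -
  let ?F = "mm_field k0 k1 km1 k2 eT"
  define c0 where "c0 = snd (x 0)"
  have dc: "((\<lambda>t. snd (x t)) has_real_derivative snd (?F (x t))) (at t)" for t
    using vd_snd[OF solU[OF sol]] .
  have dc0: "((\<lambda>t. snd (x t)) has_real_derivative 0) (at t)" for t
  proof -
    have "(\<lambda>t. snd (x t)) = (\<lambda>_. c0)" using cc unfolding c0_def by auto
    then show ?thesis by simp
  qed
  have F2: "snd (?F (x t)) = 0" for t using DERIV_unique[OF dc dc0] .
  define \<kappa> where "\<kappa> = k0 - k2 * c0"
  have F1: "fst (?F (x t)) = \<kappa>" for t
  proof -
    have "fst (?F (x t)) + snd (?F (x t)) = k0 - k2 * snd (x t)"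
      by (simp add: mm_field_eq algebra_simps)
    then show ?thesis using F2[of t] cc unfolding \<kappa>_def c0_def by simp
  qed
  define g where "g = (\<lambda>t. fst (x t) - \<kappa> * t)"
  have dg: "(g has_real_derivative 0) (at t)" for t
  proof -
    have "((\<lambda>t. fst (x t)) has_real_derivative \<kappa>) (at t)"
      using vd_fst[OF solU[OF sol]] F1 by metis
    then have "(g has_real_derivative \<kappa> - \<kappa>) (at t)"
      unfolding g_def by (auto intro!: derivative_eq_intros)
    then show ?thesis by simp
  qed
  have gc: "g t = g 0" for t using DERIV_isconst_all dg by blast
  have "g T = g 0" by (rule gc)
  then have "fst (x T) - \<kappa> * T = fst (x 0)" unfolding g_def by simp
  moreover have "x T = x 0" using per[rule_format, of 0] by simp
  ultimately have "\<kappa> * T = 0" by simp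
  then have k: "\<kappa> = 0" using T by simp
  show ?thesis
  proof
    fix t
    have "fst (x t) = fst (x 0)" using gc[of t] k unfolding g_def by simp
    moreover have "snd (x t) = snd (x 0)" using cc by simp
    ultimately show "x t = x 0" by (simp add: prod_eq_iff)
  qed
qed


lemma P_eq:
  fixes k0 k1 k2 eT c \<sigma> :: real
  assumes "k1 \<noteq> 0" "\<sigma> \<noteq> 0" "eT - c \<noteq> 0"
  shows "0 * c + 1 * (k2 / k1) -
     (0 * ln (\<sigma> * (eT - c)) +
      1 / (\<sigma> * (eT - c)) * (0 * (eT - c) + (0 - 1) * \<sigma>) *
      ((k0 - k2 * eT) / k1)) =
     (k0 - k2 * c) / (k1 * (eT - c))"
proof -
  have "1 / (\<sigma> * (eT - c)) * (0 * (eT - c) + (0 - 1) * \<sigma>) = - 1 / (eT - c)"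
    using assms by (simp add: field_simps)
  then have "0 * c + 1 * (k2 / k1) -
     (0 * ln (\<sigma> * (eT - c)) +
      1 / (\<sigma> * (eT - c)) * (0 * (eT - c) + (0 - 1) * \<sigma>) *
      ((k0 - k2 * eT) / k1)) = k2 / k1 + (k0 - k2 * eT) / (k1 * (eT - c))"
    by simp
  also have "\<dots> = (k0 - k2 * c) / (k1 * (eT - c))"
    using assms by (simp add: field_simps)
  finally show ?thesis .
qed

lemma Q_deriv:
  fixes k1 eT g c :: real
  assumes "k1 \<noteq> 0" "eT - c \<noteq> 0"
  shows "((\<lambda>c. g * c / (k1 * (eT - c))) has_real_derivative g * eT / (k1 * (eT - c)^2)) (at c)"
proof -
  define u where "u = eT - c"
  have u: "u \<noteq> 0" using assms unfolding u_def by simp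
  have e: "eT = u + c" unfolding u_def by simp
  show ?thesis
    apply (rule DERIV_cong)
     apply (rule derivative_eq_intros refl)+
    using assms apply simp
     apply (rule refl)
    using u assms(1) apply (simp add: e field_simps power2_eq_square)
    done
qed

lemma P_deriv:
  fixes k0 k1 k2 eT c \<sigma> :: real
  assumes "k1 \<noteq> 0" "\<sigma> * (eT - c) > 0"
  shows "((\<lambda>c. (k2 / k1) * c - ((k0 - k2 * eT) / k1) * ln (\<sigma> * (eT - c)))
      has_real_derivative (k0 - k2 * c) / (k1 * (eT - c))) (at c)"
proof -
  define u where "u = eT - c"
  have u: "u \<noteq> 0" using assms unfolding u_def by auto
  have s: "\<sigma> \<noteq> 0" using assms by auto
  have e: "eT = u + c" unfolding u_def by simp
  show ?thesis
    apply (rule DERIV_cong)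
     apply (rule derivative_eq_intros refl)+
    using assms apply simp
        apply (rule derivative_eq_intros refl)+
    using assms(1) s u unfolding u_def by (rule P_eq)
qed


lemma div_mult_cancel_aux:
  fixes a D w :: real
  assumes "D \<noteq> 0"
  shows "a / D * (D * w) = a * w"
  using assms by simp

lemma half_sum_aux: "((a::real) + a) / 2 = a" by simp

lemma Fc_const:
  fixes k0 k1 km1 k2 eT :: real
  assumes sol: "is_solution (mm_field k0 k1 km1 k2 eT) UNIV x"
    and z: "\<forall>t. snd (mm_field k0 k1 km1 k2 eT (x t)) = 0"
  shows "\<forall>t. snd (x t) = snd (x 0)"
proof
  fix t
  have "\<forall>t. ((\<lambda>t. snd (x t)) has_real_derivative 0) (at t)"
    using vd_snd[OF solU[OF sol]] z by metis
  from DERIV_isconst_all[OF this] show "snd (x t) = snd (x 0)" .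
qed

lemma energy_case:
  fixes k0 k1 km1 k2 eT \<sigma> :: real
  assumes nn: "k0 \<ge> 0" "k1 \<ge> 0" "km1 \<ge> 0" "k2 \<ge> 0" "eT \<ge> 0"
    and k1: "k1 > 0"
    and sol: "is_solution (mm_field k0 k1 km1 k2 eT) UNIV x"
    and per: "\<forall>t. x (t + T) = x t" and T: "T > 0"
    and sd: "\<forall>t. \<sigma> * (eT - snd (x t)) > 0"
  shows "\<forall>t. snd (x t) = snd (x 0)"
proof -
  let ?F = "mm_field k0 k1 km1 k2 eT"
  define \<gamma> where "\<gamma> = km1 + k2"
  define Qf where "Qf = (\<lambda>z. \<gamma> * z / (k1 * (eT - z)))"
  define Qd where "Qd = (\<lambda>z. \<gamma> * eT / (k1 * (eT - z)^2))"
  define Pf where "Pf = (\<lambda>z. (k2 / k1) * z - ((k0 - k2 * eT) / k1) * ln (\<sigma> * (eT - z)))"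
  define Pd where "Pd = (\<lambda>z. (k0 - k2 * z) / (k1 * (eT - z)))"
  define s where "s = (\<lambda>t. fst (x t))"
  define c where "c = (\<lambda>t. snd (x t))"
  define w where "w = (\<lambda>t. s t - Qf (c t))"
  define E where "E = (\<lambda>t. \<sigma> * (w t * w t / 2 - Pf (c t)))"
  define Fs where "Fs = (\<lambda>t. fst (?F (x t)))"
  define Fc where "Fc = (\<lambda>t. snd (?F (x t)))"
  define E' where "E' = (\<lambda>t. \<sigma> * (((Fs t - Qd (c t) * Fc t) * w t + (Fs t - Qd (c t) * Fc t) * w t) / 2
                       - Pd (c t) * Fc t))"
  have k1n: "k1 \<noteq> 0" using k1 by simp
  have dne: "eT - c t \<noteq> 0" for t using sd unfolding c_def by (metis mult_zero_right less_irrefl)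
  have ds: "DERIV s t :> Fs t" for t unfolding s_def Fs_def using vd_fst[OF solU[OF sol]] .
  have dc: "DERIV c t :> Fc t" for t unfolding c_def Fc_def using vd_snd[OF solU[OF sol]] .
  have dQ: "DERIV (\<lambda>t. Qf (c t)) t :> Qd (c t) * Fc t" for t
    unfolding Qf_def Qd_def by (rule DERIV_chain2[OF Q_deriv[OF k1n dne] dc])
  have dP: "DERIV (\<lambda>t. Pf (c t)) t :> Pd (c t) * Fc t" for t
    unfolding Pf_def Pd_def using sd unfolding c_def
    by (intro DERIV_chain2[OF P_deriv[OF k1n] dc[unfolded c_def]]) auto
  have dw: "DERIV w t :> Fs t - Qd (c t) * Fc t" for t
    unfolding w_def by (rule DERIV_diff[OF ds dQ])
  have dE: "DERIV E t :> E' t" for t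
    unfolding E_def E'_def
    by (intro DERIV_cmult DERIV_diff DERIV_cdivide DERIV_mult dw dP)
  have Fc_eq: "Fc t = k1 * (eT - c t) * w t" for t
  proof -
    have "k1 * (eT - c t) * w t = k1 * (eT - c t) * s t - (k1 * (eT - c t)) * (\<gamma> * c t / (k1 * (eT - c t)))"
      unfolding w_def Qf_def by (simp add: algebra_simps)
    also have "(k1 * (eT - c t)) * (\<gamma> * c t / (k1 * (eT - c t))) = \<gamma> * c t"
      using k1n dne[of t] by simp
    finally show ?thesis unfolding Fc_def c_def s_def \<gamma>_def by (simp add: mm_field_eq)
  qed
  have Fs_eq: "Fs t = k0 - k2 * c t - Fc t" for t
    unfolding Fs_def Fc_def c_def by (simp add: mm_field_eq algebra_simps)
  have Pd_eq: "Pd (c t) * Fc t = (k0 - k2 * c t) * w t" for t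
  proof -
    have "Pd (c t) * Fc t = (k0 - k2 * c t) / (k1 * (eT - c t)) * (k1 * (eT - c t) * w t)"
      unfolding Pd_def Fc_eq by simp
    also have "\<dots> = (k0 - k2 * c t) * w t"
      by (rule div_mult_cancel_aux) (use k1n dne[of t] in simp)
    finally show ?thesis .
  qed
  have E'_eq: "E' t = - (\<sigma> * (eT - c t)) * k1 * (1 + Qd (c t)) * (w t)^2" for t
  proof -
    have "E' t = \<sigma> * (w t * (Fs t - Qd (c t) * Fc t) - (k0 - k2 * c t) * w t)"
      unfolding E'_def Pd_eq half_sum_aux by (simp add: algebra_simps)
    also have "\<dots> = \<sigma> * (- w t * Fc t * (1 + Qd (c t)))"
      unfolding Fs_eq by (simp add: algebra_simps)
    also have "\<dots> = - (\<sigma> * (eT - c t)) * k1 * (1 + Qd (c t)) * (w t)^2"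
      unfolding Fc_eq by (simp add: algebra_simps power2_eq_square)
    finally show ?thesis .
  qed
  have Qd_nn: "Qd z \<ge> 0" for z unfolding Qd_def \<gamma>_def using nn k1 by simp
  have E'_nonpos: "E' t \<le> 0" for t
  proof -
    have a: "\<sigma> * (eT - c t) > 0" using sd unfolding c_def by simp
    have "(\<sigma> * (eT - c t)) * k1 * (1 + Qd (c t)) \<ge> 0"
      using a Qd_nn[of "c t"] k1 by simp
    then have "(\<sigma> * (eT - c t)) * k1 * (1 + Qd (c t)) * (w t)^2 \<ge> 0"
      by simp
    then show ?thesis unfolding E'_eq by simp
  qed
  have Eper: "\<forall>t. E (t + T) = E t"
    unfolding E_def w_def s_def c_def using per by simp
  have E'0: "E' t = 0" for t
    by (rule deriv_nonpos_periodic_zero[OF dE E'_nonpos Eper T])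
  have "w t = 0" for t
  proof -
    have a: "\<sigma> * (eT - c t) > 0" using sd unfolding c_def by simp
    have pos: "(\<sigma> * (eT - c t)) * k1 * (1 + Qd (c t)) > 0"
      using a Qd_nn[of "c t"] k1 by (simp add: add_pos_nonneg)
    have "(\<sigma> * (eT - c t)) * k1 * (1 + Qd (c t)) * (w t)^2 = 0"
      using E'0[of t] unfolding E'_eq by simp
    then have "(w t)^2 = 0" using pos by (metis mult_eq_0_iff less_irrefl)
    then show ?thesis by simp
  qed
  then have "\<forall>t. snd (?F (x t)) = 0"
    using Fc_eq unfolding Fc_def by simp
  then show ?thesis by (rule Fc_const[OF sol])
qed



lemma sign_const:
  fixes f :: "real \<Rightarrow> real"
  assumes c: "continuous_on UNIV f" and nz: "\<forall>t. f t \<noteq> 0"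
  shows "(\<forall>t. f t > 0) \<or> (\<forall>t. f t < 0)"
proof (rule ccontr)
  assume "\<not> ?thesis"
  then obtain a b where a: "f a > 0" and b: "f b < 0"
    using nz by (metis linorder_neqE_linordered_idom)
  have cab: "continuous_on {p..q} f" for p q using c by (rule continuous_on_subset) simp
  show False
  proof (cases "a \<le> b")
    case True
    have "continuous_on {a..b} f" using cab .
    from IVT2'[of f b 0 a, OF _ _ True this] a b obtain z where "f z = 0" by auto
    then show False using nz by simp
  next
    case False
    then have ba: "b \<le> a" by simp
    have "continuous_on {b..a} f" using cab .
    from IVT'[of f b 0 a, OF _ _ ba this] a b obtain z where "f z = 0" by auto
    then show False using nz by simp
  qed
qed

lemma fwd_nonneg:
  fixes u u' :: "real \<Rightarrow> real"
  assumes d: "\<And>\<tau>. DERIV u \<tau> :> u' \<tau>" and ab: "a \<le> b" and u0: "u a \<ge> 0" and K: "K \<ge> 0"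
    and h: "\<forall>\<tau>\<in>{a..b}. u \<tau> < 0 \<longrightarrow> u' \<tau> \<ge> K * u \<tau>"
  shows "\<forall>\<tau>\<in>{a..b}. u \<tau> \<ge> 0"
proof -
  have dw: "\<forall>\<tau>\<in>{a..b}. (u has_real_derivative u' \<tau>) (at \<tau> within {a..b})"
    using d by (auto intro: has_field_derivative_at_within)
  have hu: "\<forall>\<tau>\<in>{a..b}. u \<tau> < 0 \<longrightarrow> u' \<tau> \<ge> (K/2) * (min 0 (u \<tau>) + min 0 (u \<tau>))"
    using h by (auto simp: algebra_simps)
  from pos_pair[OF ab _ dw dw u0 u0 hu hu] K show ?thesis by auto
qed


lemma no_periodic:
  fixes k0 k1 km1 k2 eT :: real
  assumes nn: "k0 \<ge> 0" "k1 \<ge> 0" "km1 \<ge> 0" "k2 \<ge> 0" "eT \<ge> 0"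
    and sol: "is_solution (mm_field k0 k1 km1 k2 eT) UNIV x"
    and per: "\<forall>t. x (t + T) = x t" and T: "T > 0"
  shows "\<forall>t. x t = x 0"
proof -
  let ?F = "mm_field k0 k1 km1 k2 eT"
  define \<gamma> where "\<gamma> = km1 + k2"
  define s where "s = (\<lambda>t. fst (x t))"
  define c where "c = (\<lambda>t. snd (x t))"
  define Fc where "Fc = (\<lambda>t. snd (?F (x t)))"
  have g0: "\<gamma> \<ge> 0" unfolding \<gamma>_def using nn by simp
  have dc: "DERIV c t :> Fc t" for t unfolding c_def Fc_def using vd_snd[OF solU[OF sol]] .
  have Fc_eq: "Fc t = k1 * (eT - c t) * s t - \<gamma> * c t" for t
    unfolding Fc_def c_def s_def \<gamma>_def by (simp add: mm_field_eq)
  have contx: "continuous_on UNIV x"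
    by (rule continuous_on_vector_derivative) (use solU[OF sol] in auto)
  have contc: "continuous_on UNIV c" unfolding c_def
    by (intro continuous_intros contx)
  have cper: "\<forall>t. c (t + T) = c t" unfolding c_def using per by simp
  have cc: "\<forall>t. c t = c 0"
  proof (cases "k1 = 0")
    case True
    define h where "h = (\<lambda>t. c t * c t)"
    define h' where "h' = (\<lambda>t. Fc t * c t + Fc t * c t)"
    have dh: "DERIV h t :> h' t" for t unfolding h_def h'_def by (rule DERIV_mult[OF dc dc])
    have h'eq: "h' t = - 2 * \<gamma> * (c t * c t)" for t unfolding h'_def Fc_eq True by simp
    have h'np: "h' t \<le> 0" for t unfolding h'eq using g0 by simp
    have hper: "\<forall>t. h (t + T) = h t" unfolding h_def using cper by simp
    have "h' t = 0" for t by (rule deriv_nonpos_periodic_zero[OF dh h'np hper T])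
    then have "\<gamma> * (c t * c t) = 0" for t unfolding h'eq by simp
    then have "Fc t = 0" for t unfolding Fc_eq True by (simp add: mult_eq_0_iff)
    then have "\<forall>t. snd (?F (x t)) = 0" unfolding Fc_def by simp
    from Fc_const[OF sol this] show ?thesis unfolding c_def by simp
  next
    case False
    then have k1: "k1 > 0" using nn by simp
    define d where "d = (\<lambda>t. eT - c t)"
    have dd: "DERIV d t :> - Fc t" for t unfolding d_def
      using DERIV_diff[OF DERIV_const dc] by simp
    have mFc: "- Fc t = \<gamma> * eT - (k1 * s t + \<gamma>) * d t" for t
      unfolding Fc_eq d_def by (simp add: algebra_simps)
    have dper: "\<forall>t. d (t + T) = d t" unfolding d_def using cper by simp
    have bnd: "\<exists>K\<ge>0. \<forall>\<tau>\<in>{a..b}. \<bar>k1 * s \<tau> + \<gamma>\<bar> \<le> K" for a b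
    proof -
      have "continuous_on {a..b} x" using contx by (rule continuous_on_subset) simp
      then obtain B where B0: "B \<ge> 0" and B: "\<forall>\<tau>\<in>{a..b}. \<bar>fst (x \<tau>)\<bar> \<le> B \<and> \<bar>snd (x \<tau>)\<bar> \<le> B"
        by (rule bound_on_compact)
      have "\<forall>\<tau>\<in>{a..b}. \<bar>k1 * s \<tau> + \<gamma>\<bar> \<le> k1 * B + \<gamma>"
      proof
        fix \<tau> assume "\<tau> \<in> {a..b}"
        then have "\<bar>s \<tau>\<bar> \<le> B" using B unfolding s_def by auto
        then have "\<bar>k1 * s \<tau>\<bar> \<le> k1 * B" using k1 mult_left_mono[of "\<bar>s \<tau>\<bar>" B k1]
          by (simp add: abs_mult)
        then show "\<bar>k1 * s \<tau> + \<gamma>\<bar> \<le> k1 * B + \<gamma>" using g0 by linarith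
      qed
      moreover have "k1 * B + \<gamma> \<ge> 0" using k1 B0 g0 by simp
      ultimately show ?thesis by blast
    qed
    have key: "- Y * v \<ge> K * v" if "\<bar>Y\<bar> \<le> K" "v < 0" for Y K v :: real
    proof -
      have "(K + Y) * (- v) \<ge> 0" using that by (intro mult_nonneg_nonneg) auto
      then show ?thesis by (simp add: algebra_simps)
    qed
    have fwd_d: "\<forall>\<tau>\<in>{a..b}. d \<tau> \<ge> 0" if "a \<le> b" "d a \<ge> 0" for a b
    proof -
      obtain K where K0: "K \<ge> 0" and K: "\<forall>\<tau>\<in>{a..b}. \<bar>k1 * s \<tau> + \<gamma>\<bar> \<le> K"
        using bnd by blast
      show ?thesis
      proof (rule fwd_nonneg[OF dd that K0], intro ballI impI)
        fix \<tau> assume t: "\<tau> \<in> {a..b}" and neg: "d \<tau> < 0"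
        have "- (k1 * s \<tau> + \<gamma>) * d \<tau> \<ge> K * d \<tau>" using key K t neg by blast
        moreover have "\<gamma> * eT \<ge> 0" using g0 nn by simp
        ultimately show "- Fc \<tau> \<ge> K * d \<tau>" unfolding mFc by (simp add: algebra_simps)
      qed
    qed
    show ?thesis
    proof (cases "\<exists>t1. d t1 = 0")
      case True
      then obtain t1 where t1: "d t1 = 0" by blast
      show ?thesis
      proof (cases "\<gamma> * eT > 0")
        case True
        define b where "b = t1 + T"
        have tb: "t1 < b" unfolding b_def using T by simp
        have db: "d b = 0" unfolding b_def using dper t1 by simp
        have nn_d: "\<forall>\<tau>\<in>{t1..b}. d \<tau> \<ge> 0" using fwd_d[of t1 b] tb t1 by simp
        have "- Fc b \<le> 0"
        proof (rule left_deriv_nonpos[OF tb])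
          show "(d has_real_derivative - Fc b) (at b within {t1..b})"
            by (rule has_field_derivative_at_within[OF dd])
          show "\<forall>\<tau>\<in>{t1..<b}. d b \<le> d \<tau>" using nn_d db by auto
        qed
        moreover have "- Fc b = \<gamma> * eT" unfolding mFc db by simp
        ultimately show ?thesis using True by simp
      next
        case False
        moreover have "\<gamma> * eT \<ge> 0" using g0 nn by simp
        ultimately have ge0: "\<gamma> * eT = 0" by simp
        define u where "u = (\<lambda>t. - d t)"
        have du: "DERIV u t :> Fc t" for t unfolding u_def using DERIV_minus[OF dd] by simp
        have fwd_u: "\<forall>\<tau>\<in>{a..b}. u \<tau> \<ge> 0" if "a \<le> b" "u a \<ge> 0" for a b
        proof -
          obtain K where K0: "K \<ge> 0" and K: "\<forall>\<tau>\<in>{a..b}. \<bar>k1 * s \<tau> + \<gamma>\<bar> \<le> K"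
            using bnd by blast
          show ?thesis
          proof (rule fwd_nonneg[OF du that K0], intro ballI impI)
            fix \<tau> assume t: "\<tau> \<in> {a..b}" and neg: "u \<tau> < 0"
            have "- (k1 * s \<tau> + \<gamma>) * u \<tau> \<ge> K * u \<tau>" using key K t neg by blast
            moreover have "Fc \<tau> = - (k1 * s \<tau> + \<gamma>) * u \<tau>"
              using mFc[of \<tau>] ge0 unfolding u_def by (simp add: algebra_simps)
            ultimately show "Fc \<tau> \<ge> K * u \<tau>" by simp
          qed
        qed
        have "d t = 0" for t
        proof -
          obtain n :: nat where n: "t1 - t \<le> real n * T" using exists_mult_ge[OF T] by blast
          define b where "b = t + real n * T"
          have tb: "t1 \<le> b" unfolding b_def using n by simp
          have "d b \<ge> 0" using fwd_d[OF tb] t1 tb by simp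
          moreover have "u b \<ge> 0" using fwd_u[OF tb] t1 tb unfolding u_def by simp
          ultimately have "d b = 0" unfolding u_def by simp
          moreover have "d b = d t" unfolding b_def by (rule periodic_nat[OF dper])
          ultimately show ?thesis by simp
        qed
        then have "c t = eT" for t unfolding d_def by simp
        then show ?thesis by simp
      qed
    next
      case False
      then have nz: "\<forall>t. d t \<noteq> 0" by blast
      have contd: "continuous_on UNIV d" unfolding d_def by (intro continuous_intros contc)
      from sign_const[OF contd nz] obtain \<sigma> :: real where "\<forall>t. \<sigma> * (eT - snd (x t)) > 0"
      proof
        assume "\<forall>t. d t > 0"
        then show ?thesis using that[of 1] unfolding d_def c_def by simp
      next
        assume "\<forall>t. d t < 0"
        then show ?thesis using that[of "-1"] unfolding d_def c_def by simp
      qed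
      from energy_case[OF nn k1 sol per T this] show ?thesis unfolding c_def by simp
    qed
  qed
  show ?thesis by (rule const_c_implies_const[OF sol per T]) (use cc c_def in simp)
qed



lemma lipschitz_cont:
  fixes G :: "real \<times> real \<Rightarrow> real \<times> real"
  assumes L: "L > 0" and lip: "\<forall>a b. norm (G a - G b) \<le> L * norm (a - b)"
  shows "continuous_on UNIV G"
  unfolding continuous_on_iff
proof (intro ballI allI impI)
  fix x :: "real \<times> real" and e :: real assume e: "e > 0"
  show "\<exists>d>0. \<forall>x'\<in>UNIV. dist x' x < d \<longrightarrow> dist (G x') (G x) < e"
  proof (intro exI[of _ "e / L"] conjI ballI impI)
    show "e / L > 0" using e L by simp
    fix x' assume "dist x' x < e / L"
    then have "L * dist x' x < e" using L by (simp add: field_simps)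
    moreover have "norm (G x' - G x) \<le> L * norm (x' - x)" using lip by blast
    then have "dist (G x') (G x) \<le> L * dist x' x" by (simp only: dist_norm)
    ultimately show "dist (G x') (G x) < e" by simp
  qed
qed

lemma clamp_real_in: "(h::real) \<ge> 0 \<Longrightarrow> clamp 0 h t \<in> {0..h}"
  using clamp_in_interval[of 0 h t] by (simp add: cbox_interval)

lemma clamp_real_id: "(t::real) \<in> {0..h} \<Longrightarrow> clamp 0 h t = t"
  using clamp_cancel_cbox[of t 0 h] by (simp add: cbox_interval)

lemma picard_local:
  fixes G :: "real \<times> real \<Rightarrow> real \<times> real"
  assumes L: "L > 0" and lip: "\<forall>a b. norm (G a - G b) \<le> L * norm (a - b)"
  shows "\<exists>y. y 0 = q \<and> (\<forall>t\<in>{0..1/(2*L)}. (y has_vector_derivative G (y t)) (at t within {0..1/(2*L)}))"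
proof -
  define h where "h = 1 / (2 * L)"
  have h0: "h > 0" unfolding h_def using L by simp
  have Lh: "L * h = 1/2" unfolding h_def using L by simp
  have cG: "continuous_on UNIV G" by (rule lipschitz_cont[OF L lip])
  define f :: "(real \<Rightarrow>\<^sub>C (real \<times> real)) \<Rightarrow> real \<Rightarrow> real \<times> real"
    where "f = (\<lambda>y u. q + integral {0..u} (\<lambda>\<sigma>. G (apply_bcontfun y \<sigma>)))"
  have cGy: "continuous_on S (\<lambda>\<sigma>. G (apply_bcontfun y \<sigma>))" for y S
    by (rule continuous_on_compose2[OF cG]) auto
  have df: "(f y has_vector_derivative G (apply_bcontfun y t)) (at t within {0..h})"
    if "t \<in> {0..h}" for y t
    unfolding f_def
    by (rule derivative_eq_intros integral_has_vector_derivative[OF cGy that] | simp)+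
  have cf: "continuous_on (cbox 0 h) (f y)" for y
    unfolding cbox_interval by (rule continuous_on_vector_derivative) (use df in blast)
  have exg: "\<exists>g. \<forall>t. apply_bcontfun g t = f y (clamp 0 h t)" for y
  proof -
    obtain g :: "real \<Rightarrow>\<^sub>C (real \<times> real)" where "\<And>t. apply_bcontfun g t = f y (clamp 0 h t)"
      using continuous_on_cbox_bcontfunE[OF cf[of y]] by metis
    then show ?thesis by blast
  qed
  define \<Phi> where "\<Phi> = (\<lambda>y. SOME g. \<forall>t. apply_bcontfun g t = f y (clamp 0 h t))"
  have \<Phi>: "apply_bcontfun (\<Phi> y) t = f y (clamp 0 h t)" for y t
    unfolding \<Phi>_def using someI_ex[OF exg[of y]] by blast
  have contr: "dist (\<Phi> y) (\<Phi> z) \<le> (1/2) * dist y z" for y z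
  proof (rule dist_bound)
    fix t
    define u where "u = clamp 0 h t"
    have u: "u \<in> {0..h}" unfolding u_def using clamp_real_in h0 by simp
    have int: "(\<lambda>\<sigma>. G (apply_bcontfun w \<sigma>)) integrable_on {0..u}" for w
      by (rule integrable_continuous_interval[OF cGy])
    have "dist (apply_bcontfun (\<Phi> y) t) (apply_bcontfun (\<Phi> z) t)
        = norm (integral {0..u} (\<lambda>\<sigma>. G (apply_bcontfun y \<sigma>) - G (apply_bcontfun z \<sigma>)))"
      unfolding \<Phi> f_def u_def[symmetric] dist_norm using integral_diff[OF int int] by simp
    also have "\<dots> \<le> (L * dist y z) * (u - 0)"
    proof (rule integral_bound)
      show "0 \<le> u" using u by simp
      show "continuous_on {0..u} (\<lambda>\<sigma>. G (apply_bcontfun y \<sigma>) - G (apply_bcontfun z \<sigma>))"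
        by (intro continuous_intros cGy)
      fix \<sigma> assume "\<sigma> \<in> {0..u}"
      have "norm (G (apply_bcontfun y \<sigma>) - G (apply_bcontfun z \<sigma>))
          \<le> L * norm (apply_bcontfun y \<sigma> - apply_bcontfun z \<sigma>)" using lip by blast
      also have "norm (apply_bcontfun y \<sigma> - apply_bcontfun z \<sigma>) \<le> dist y z"
        using dist_bounded[of y \<sigma> z] by (simp add: dist_norm)
      then have "L * norm (apply_bcontfun y \<sigma> - apply_bcontfun z \<sigma>) \<le> L * dist y z"
        using L by simp
      finally show "norm (G (apply_bcontfun y \<sigma>) - G (apply_bcontfun z \<sigma>)) \<le> L * dist y z" .
    qed
    also have "\<dots> \<le> (L * dist y z) * h" using u L by (intro mult_left_mono) auto
    also have "\<dots> = (1/2) * dist y z" using Lh by (simp add: algebra_simps)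
    finally show "dist (apply_bcontfun (\<Phi> y) t) (apply_bcontfun (\<Phi> z) t) \<le> (1/2) * dist y z" .
  qed
  obtain y where fixp: "\<Phi> y = y"
    using banach_fix_type[of "1/2" \<Phi>] contr by auto
  define yf where "yf = apply_bcontfun y"
  have yeq: "yf t = f y t" if "t \<in> {0..h}" for t
    unfolding yf_def using \<Phi>[of y t] fixp clamp_real_id[OF that] by simp
  have "yf 0 = q" using yeq[of 0] h0 unfolding f_def by simp
  moreover have "\<forall>t\<in>{0..h}. (yf has_vector_derivative G (yf t)) (at t within {0..h})"
  proof
    fix t assume t: "t \<in> {0..h}"
    show "(yf has_vector_derivative G (yf t)) (at t within {0..h})"
      using has_vector_derivative_transform_within[OF df[OF t] zero_less_one t, where g=yf] yeq
      unfolding yf_def by simp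
  qed
  ultimately show ?thesis unfolding h_def by blast
qed


lemma vd_local:
  assumes d: "(f has_vector_derivative D) (at t within S)"
    and "a < t" "t < b" and sub: "T \<inter> {a<..<b} \<subseteq> S"
  shows "(f has_vector_derivative D) (at t within T)"
proof -
  have eq: "at t within T = at t within (T \<inter> {a<..<b})"
    by (rule at_within_nhd[of t "{a<..<b}"]) (use assms in auto)
  have "(f has_vector_derivative D) (at t within (T \<inter> {a<..<b}))"
    by (rule has_vector_derivative_within_subset[OF d sub])
  then show ?thesis using eq by simp
qed

lemma vd_shift:
  assumes "(y has_vector_derivative D) (at (t - a) within {0..h})"
  shows "((\<lambda>\<tau>. y (\<tau> - a)) has_vector_derivative D) (at t within {a..a+h})"
proof -
  have d1: "((\<lambda>\<tau>. \<tau> - a) has_vector_derivative 1) (at t within {a..a+h})"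
    by (auto intro!: derivative_eq_intros)
  have img: "(\<lambda>\<tau>. \<tau> - a) ` {a..a+h} = {0..h}" by simp
  from vector_diff_chain_within[OF d1, of y D] assms img
  show ?thesis by (simp add: o_def)
qed

primrec glue_pts :: "('a \<Rightarrow> real \<Rightarrow> 'a) \<Rightarrow> real \<Rightarrow> 'a \<Rightarrow> nat \<Rightarrow> 'a" where
  "glue_pts Y h p 0 = p"
| "glue_pts Y h p (Suc n) = Y (glue_pts Y h p n) h"

lemma glue_global:
  fixes G :: "real \<times> real \<Rightarrow> real \<times> real" and h :: real
  assumes h: "h > 0"
    and loc: "\<And>q. \<exists>y. y 0 = q \<and> (\<forall>t\<in>{0..h}. (y has_vector_derivative G (y t)) (at t within {0..h}))"
  shows "\<exists>x. is_solution G {0..} x \<and> x 0 = p"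
proof -
  define Y where "Y = (\<lambda>q. SOME y. y 0 = q \<and> (\<forall>t\<in>{0..h}. (y has_vector_derivative G (y t)) (at t within {0..h})))"
  have Y: "Y q 0 = q \<and> (\<forall>t\<in>{0..h}. (Y q has_vector_derivative G (Y q t)) (at t within {0..h}))" for q
    unfolding Y_def using someI_ex[OF loc[of q]] by blast
  define pts where "pts = glue_pts Y h p"
  have pts0: "pts 0 = p" and ptsS: "pts (Suc n) = Y (pts n) h" for n unfolding pts_def by simp_all
  define N where "N = (\<lambda>t. nat \<lfloor>t / h\<rfloor>)"
  define x where "x = (\<lambda>t. Y (pts (N t)) (t - real (N t) * h))"
  have Nn: "N \<tau> = n" if "real n * h \<le> \<tau>" "\<tau> < real (Suc n) * h" for n \<tau>
  proof -
    have "real n \<le> \<tau> / h" "\<tau> / h < real n + 1" using that h by (simp_all add: field_simps)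
    then have "\<lfloor>\<tau> / h\<rfloor> = int n" by (simp add: floor_eq_iff)
    then show ?thesis unfolding N_def by simp
  qed
  have piece: "x \<tau> = Y (pts n) (\<tau> - real n * h)" if "real n * h \<le> \<tau>" "\<tau> \<le> real (Suc n) * h" for n \<tau>
  proof (cases "\<tau> < real (Suc n) * h")
    case True
    then show ?thesis unfolding x_def using Nn[OF that(1) True] by simp
  next
    case False
    then have te: "\<tau> = real (Suc n) * h" using that by simp
    have "N \<tau> = Suc n" using Nn[of "Suc n" \<tau>] te h by simp
    then have "x \<tau> = Y (pts (Suc n)) 0" unfolding x_def te by simp
    also have "\<dots> = pts (Suc n)" using Y by simp
    also have "\<dots> = Y (pts n) (\<tau> - real n * h)" unfolding ptsS te by (simp add: algebra_simps)
    finally show ?thesis .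
  qed
  have dpiece: "(x has_vector_derivative G (x \<tau>)) (at \<tau> within {real n * h..real n * h + h})"
    if "\<tau> \<in> {real n * h..real n * h + h}" for n \<tau>
  proof -
    have t: "\<tau> - real n * h \<in> {0..h}" using that by simp
    have "((\<lambda>\<tau>. Y (pts n) (\<tau> - real n * h)) has_vector_derivative G (Y (pts n) (\<tau> - real n * h)))
        (at \<tau> within {real n * h..real n * h + h})"
      by (rule vd_shift) (use Y t in blast)
    moreover have "x \<sigma> = Y (pts n) (\<sigma> - real n * h)" if "\<sigma> \<in> {real n * h..real n * h + h}" for \<sigma>
      using piece[of n \<sigma>] that by (simp add: algebra_simps)
    ultimately show ?thesis
      using has_vector_derivative_transform_within[OF _ zero_less_one that, where g=x] that
      by (metis (no_types, lifting))
  qed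
  have deriv: "(x has_vector_derivative G (x t)) (at t within {0..})" if t0: "t \<ge> 0" for t
  proof -
    define n where "n = N t"
    have nt: "real n * h \<le> t" "t < real n * h + h"
    proof -
      have "real_of_int \<lfloor>t / h\<rfloor> \<le> t / h" "t / h < real_of_int \<lfloor>t / h\<rfloor> + 1"
        by simp_all
      moreover have "\<lfloor>t / h\<rfloor> \<ge> 0" using t0 h by simp
      ultimately have "real n \<le> t / h" "t / h < real n + 1" unfolding n_def N_def by simp_all
      then show "real n * h \<le> t" "t < real n * h + h" using h by (simp_all add: field_simps)
    qed
    have dn: "(x has_vector_derivative G (x t)) (at t within {real n * h..real n * h + h})"
      by (rule dpiece) (use nt in simp)
    show ?thesis
    proof (cases "real n * h < t \<or> n = 0")
      case True
      show ?thesis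
      proof (rule vd_local[OF dn, of "if n = 0 then -1 else real n * h" "real n * h + h"])
        show "(if n = 0 then -1 else real n * h) < t" using True nt t0 by auto
        show "t < real n * h + h" using nt by simp
        show "{0..} \<inter> {(if n = 0 then -1 else real n * h)<..<real n * h + h} \<subseteq> {real n * h..real n * h + h}"
          by auto
      qed
    next
      case False
      then have te: "t = real n * h" and n1: "n \<ge> 1" using nt by auto
      obtain m where m: "n = Suc m" using n1 by (cases n) auto
      have dm: "(x has_vector_derivative G (x t)) (at t within {real m * h..real m * h + h})"
        by (rule dpiece) (use te m h in \<open>simp add: algebra_simps\<close>)
      have du: "(x has_vector_derivative G (x t)) (at t within ({real m * h..real m * h + h} \<union> {real n * h..real n * h + h}))"
        by (rule has_vector_derivative_within_Un[OF dm dn])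
      show ?thesis
      proof (rule vd_local[OF du, of "real m * h" "real n * h + h"])
        show "real m * h < t" using te m h by simp
        show "t < real n * h + h" using nt by simp
        show "{0..} \<inter> {real m * h<..<real n * h + h} \<subseteq> {real m * h..real m * h + h} \<union> {real n * h..real n * h + h}"
          using m by (auto simp: algebra_simps)
      qed
    qed
  qed
  have "x 0 = p" unfolding x_def N_def using Y pts0 by simp
  moreover have "is_solution G {0..} x"
    unfolding is_solution_def using deriv by (auto simp: is_interval_ci)
  ultimately show ?thesis by blast
qed


definition clip :: "real \<Rightarrow> real \<Rightarrow> real \<times> real \<Rightarrow> real \<times> real" where
  "clip S C p = (max 0 (min S (fst p)), max 0 (min C (snd p)))"

definition inbox :: "real \<Rightarrow> real \<Rightarrow> real \<times> real \<Rightarrow> bool" where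
  "inbox S C p \<longleftrightarrow> 0 \<le> fst p \<and> fst p \<le> S \<and> 0 \<le> snd p \<and> snd p \<le> C"

lemma clip_inbox: "S \<ge> 0 \<Longrightarrow> C \<ge> 0 \<Longrightarrow> inbox S C (clip S C p)"
  unfolding clip_def inbox_def by auto

lemma clip_id: "inbox S C p \<Longrightarrow> clip S C p = p"
  unfolding clip_def inbox_def by (cases p) auto

lemma clip_comp: "\<bar>max 0 (min S u) - max 0 (min S v)\<bar> \<le> \<bar>u - v\<bar>" for S u v :: real
  by (auto simp: max_def min_def)

lemma norm_pair_mono:
  fixes a b c d :: real
  assumes "\<bar>a\<bar> \<le> \<bar>c\<bar>" "\<bar>b\<bar> \<le> \<bar>d\<bar>"
  shows "norm (a, b) \<le> norm (c, d)"
proof -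
  have "a^2 \<le> c^2" "b^2 \<le> d^2" using assms abs_le_square_iff by blast+
  then show ?thesis unfolding norm_Pair by (intro real_sqrt_le_mono) simp
qed

lemma clip_nonexp: "norm (clip S C a - clip S C b) \<le> norm (a - b)"
  unfolding clip_def
  by (cases a, cases b) (simp add: norm_pair_mono clip_comp)

lemma abs_le_norm_pair1: "\<bar>fst p\<bar> \<le> norm p" for p :: "real \<times> real"
  by (metis norm_fst_le prod.collapse real_norm_def)

lemma abs_le_norm_pair2: "\<bar>snd p\<bar> \<le> norm p" for p :: "real \<times> real"
  by (metis norm_snd_le prod.collapse real_norm_def)

lemmas abs_le_norm_pair = abs_le_norm_pair1 abs_le_norm_pair2

lemma F_diff_bound:
  fixes k0 k1 km1 k2 eT S C :: real
  assumes nn: "k0 \<ge> 0" "k1 \<ge> 0" "km1 \<ge> 0" "k2 \<ge> 0" "eT \<ge> 0"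
    and a: "inbox S C a" and b: "inbox S C b"
  defines "K0 \<equiv> 2 * (k1 * eT + k1 * C + k1 * S + km1) + k2"
  shows "\<bar>fst (mm_field k0 k1 km1 k2 eT a - mm_field k0 k1 km1 k2 eT b)\<bar>
       + \<bar>snd (mm_field k0 k1 km1 k2 eT a - mm_field k0 k1 km1 k2 eT b)\<bar>
       \<le> K0 * (\<bar>fst a - fst b\<bar> + \<bar>snd a - snd b\<bar>)"
proof -
  obtain s1 c1 where a1: "a = (s1, c1)" by (cases a)
  obtain s2 c2 where b1: "b = (s2, c2)" by (cases b)
  have bx: "0 \<le> s1" "s1 \<le> S" "0 \<le> c1" "c1 \<le> C" "0 \<le> s2" "s2 \<le> S" "0 \<le> c2" "c2 \<le> C"
    using a b unfolding inbox_def a1 b1 by auto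
  define ds where "ds = s1 - s2"
  define dc where "dc = c1 - c2"
  define D1 where "D1 = - k1 * eT * ds + k1 * c1 * ds + k1 * s2 * dc + km1 * dc"
  have e1: "fst (mm_field k0 k1 km1 k2 eT a - mm_field k0 k1 km1 k2 eT b) = D1"
    unfolding a1 b1 D1_def ds_def dc_def by (simp add: mm_field_eq algebra_simps)
  have e2: "snd (mm_field k0 k1 km1 k2 eT a - mm_field k0 k1 km1 k2 eT b) = - D1 - k2 * dc"
    unfolding a1 b1 D1_def ds_def dc_def by (simp add: mm_field_eq algebra_simps)
  define M where "M = k1 * eT + k1 * C + k1 * S + km1"
  have t1: "\<bar>k1 * eT * ds\<bar> \<le> k1 * eT * \<bar>ds\<bar>" using nn by (simp add: abs_mult)
  have t2: "\<bar>k1 * c1 * ds\<bar> \<le> k1 * C * \<bar>ds\<bar>"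
    using nn bx by (simp add: abs_mult mult_right_mono mult_left_mono)
  have t3: "\<bar>k1 * s2 * dc\<bar> \<le> k1 * S * \<bar>dc\<bar>"
    using nn bx by (simp add: abs_mult mult_right_mono mult_left_mono)
  have t4: "\<bar>km1 * dc\<bar> \<le> km1 * \<bar>dc\<bar>" using nn by (simp add: abs_mult)
  have "\<bar>D1\<bar> \<le> k1 * eT * \<bar>ds\<bar> + k1 * C * \<bar>ds\<bar> + k1 * S * \<bar>dc\<bar> + km1 * \<bar>dc\<bar>"
    unfolding D1_def using t1 t2 t3 t4 by linarith
  also have "\<dots> \<le> M * (\<bar>ds\<bar> + \<bar>dc\<bar>)"
  proof -
    have "k1 * eT * \<bar>dc\<bar> \<ge> 0" "k1 * C * \<bar>dc\<bar> \<ge> 0" "k1 * S * \<bar>ds\<bar> \<ge> 0" "km1 * \<bar>ds\<bar> \<ge> 0"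
      using nn bx by auto
    then show ?thesis unfolding M_def by (simp add: algebra_simps)
  qed
  finally have D1b: "\<bar>D1\<bar> \<le> M * (\<bar>ds\<bar> + \<bar>dc\<bar>)" .
  have "\<bar>- D1 - k2 * dc\<bar> \<le> \<bar>- D1\<bar> + \<bar>k2 * dc\<bar>" by (rule abs_triangle_ineq4)
  then have "\<bar>- D1 - k2 * dc\<bar> \<le> \<bar>D1\<bar> + k2 * \<bar>dc\<bar>" using nn by (simp add: abs_mult)
  moreover have "k2 * \<bar>dc\<bar> \<le> k2 * (\<bar>ds\<bar> + \<bar>dc\<bar>)" using nn by (simp add: mult_left_mono)
  ultimately have "\<bar>D1\<bar> + \<bar>- D1 - k2 * dc\<bar> \<le> (2 * M + k2) * (\<bar>ds\<bar> + \<bar>dc\<bar>)"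
    using D1b by (simp add: algebra_simps)
  moreover have "fst a - fst b = ds" "snd a - snd b = dc" by (simp_all add: a1 b1 ds_def dc_def)
  ultimately show ?thesis unfolding e1 e2 K0_def M_def by simp
qed

lemma K0_nonneg:
  fixes k0 k1 km1 k2 eT S C :: real
  assumes "k0 \<ge> 0" "k1 \<ge> 0" "km1 \<ge> 0" "k2 \<ge> 0" "eT \<ge> 0" "S \<ge> 0" "C \<ge> 0"
  shows "2 * (k1 * eT + k1 * C + k1 * S + km1) + k2 \<ge> 0"
  using assms by simp

lemma F_lip_box:
  fixes k0 k1 km1 k2 eT S C :: real
  assumes nn: "k0 \<ge> 0" "k1 \<ge> 0" "km1 \<ge> 0" "k2 \<ge> 0" "eT \<ge> 0" and SC: "S \<ge> 0" "C \<ge> 0"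
    and a: "inbox S C a" and b: "inbox S C b"
  defines "K0 \<equiv> 2 * (k1 * eT + k1 * C + k1 * S + km1) + k2"
  shows "norm (mm_field k0 k1 km1 k2 eT a - mm_field k0 k1 km1 k2 eT b) \<le> (2 * K0) * norm (a - b)"
proof -
  let ?d = "mm_field k0 k1 km1 k2 eT a - mm_field k0 k1 km1 k2 eT b"
  have K0: "K0 \<ge> 0" unfolding K0_def using nn SC by simp
  have "norm ?d \<le> \<bar>fst ?d\<bar> + \<bar>snd ?d\<bar>"
    by (metis norm_Pair_le prod.collapse real_norm_def)
  also have "\<dots> \<le> K0 * (\<bar>fst a - fst b\<bar> + \<bar>snd a - snd b\<bar>)"
    unfolding K0_def by (rule F_diff_bound[OF nn a b])
  also have "\<dots> \<le> K0 * (2 * norm (a - b))"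
  proof -
    have "\<bar>fst a - fst b\<bar> \<le> norm (a - b)" "\<bar>snd a - snd b\<bar> \<le> norm (a - b)"
      using abs_le_norm_pair[of "a - b"] by simp_all
    then show ?thesis using K0 by (intro mult_left_mono) auto
  qed
  finally show ?thesis by (simp add: algebra_simps)
qed

lemma G_lip:
  fixes k0 k1 km1 k2 eT S C :: real
  assumes nn: "k0 \<ge> 0" "k1 \<ge> 0" "km1 \<ge> 0" "k2 \<ge> 0" "eT \<ge> 0" and SC: "S \<ge> 0" "C \<ge> 0"
  defines "K0 \<equiv> 2 * (k1 * eT + k1 * C + k1 * S + km1) + k2"
  shows "\<forall>a b. norm (mm_field k0 k1 km1 k2 eT (clip S C a) - mm_field k0 k1 km1 k2 eT (clip S C b))
      \<le> (2 * K0 + 1) * norm (a - b)"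
proof (intro allI)
  fix a b
  have K0: "K0 \<ge> 0" unfolding K0_def using nn SC by simp
  have "norm (mm_field k0 k1 km1 k2 eT (clip S C a) - mm_field k0 k1 km1 k2 eT (clip S C b))
      \<le> (2 * K0) * norm (clip S C a - clip S C b)"
    unfolding K0_def by (rule F_lip_box[OF nn SC clip_inbox[OF SC] clip_inbox[OF SC]])
  also have "\<dots> \<le> (2 * K0) * norm (a - b)" using K0 clip_nonexp by (intro mult_left_mono) auto
  also have "\<dots> \<le> (2 * K0 + 1) * norm (a - b)" by (simp add: algebra_simps)
  finally show "norm (mm_field k0 k1 km1 k2 eT (clip S C a) - mm_field k0 k1 km1 k2 eT (clip S C b))
      \<le> (2 * K0 + 1) * norm (a - b)" .
qed



lemma pos_single:
  fixes u u' :: "real \<Rightarrow> real"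
  assumes ab: "a \<le> b"
    and du: "\<forall>\<tau>\<in>{a..b}. (u has_real_derivative u' \<tau>) (at \<tau> within {a..b})"
    and u0: "u a \<ge> 0" and h: "\<forall>\<tau>\<in>{a..b}. u \<tau> < 0 \<longrightarrow> u' \<tau> \<ge> 0"
  shows "\<forall>\<tau>\<in>{a..b}. u \<tau> \<ge> 0"
proof -
  have hu: "\<forall>\<tau>\<in>{a..b}. u \<tau> < 0 \<longrightarrow> u' \<tau> \<ge> 0 * (min 0 (u \<tau>) + min 0 (u \<tau>))" using h by simp
  from pos_pair[OF ab order_refl du du u0 u0 hu hu] show ?thesis by simp
qed

lemma uniq_box:
  fixes k0 k1 km1 k2 eT S C :: real
  assumes nn: "k0 \<ge> 0" "k1 \<ge> 0" "km1 \<ge> 0" "k2 \<ge> 0" "eT \<ge> 0" and SC: "S \<ge> 0" "C \<ge> 0"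
    and a: "a \<ge> 0"
    and d1: "\<forall>t\<in>{0..a}. (x1 has_vector_derivative mm_field k0 k1 km1 k2 eT (x1 t)) (at t within {0..a})"
    and d2: "\<forall>t\<in>{0..a}. (x2 has_vector_derivative mm_field k0 k1 km1 k2 eT (x2 t)) (at t within {0..a})"
    and b1: "\<forall>t\<in>{0..a}. inbox S C (x1 t)" and b2: "\<forall>t\<in>{0..a}. inbox S C (x2 t)"
    and e0: "x1 0 = x2 0"
  shows "\<forall>t\<in>{0..a}. x1 t = x2 t"
proof -
  let ?F = "mm_field k0 k1 km1 k2 eT"
  define K0 where "K0 = 2 * (k1 * eT + k1 * C + k1 * S + km1) + k2"
  have K0: "K0 \<ge> 0" unfolding K0_def using nn SC by simp
  define ds where "ds = (\<lambda>t. fst (x1 t) - fst (x2 t))"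
  define dc where "dc = (\<lambda>t. snd (x1 t) - snd (x2 t))"
  define D1 where "D1 = (\<lambda>t. fst (?F (x1 t) - ?F (x2 t)))"
  define D2 where "D2 = (\<lambda>t. snd (?F (x1 t) - ?F (x2 t)))"
  define u where "u = (\<lambda>t. - (ds t * ds t + dc t * dc t))"
  define u' where "u' = (\<lambda>t. - ((D1 t * ds t + D1 t * ds t) + (D2 t * dc t + D2 t * dc t)))"
  have dds: "(ds has_real_derivative D1 t) (at t within {0..a})" if "t \<in> {0..a}" for t
  proof -
    have "((\<lambda>t. fst (x1 t) - fst (x2 t)) has_real_derivative fst (?F (x1 t)) - fst (?F (x2 t))) (at t within {0..a})"
      using d1 d2 that by (intro DERIV_diff vd_fst) auto
    then show ?thesis unfolding ds_def D1_def by simp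
  qed
  have ddc: "(dc has_real_derivative D2 t) (at t within {0..a})" if "t \<in> {0..a}" for t
  proof -
    have "((\<lambda>t. snd (x1 t) - snd (x2 t)) has_real_derivative snd (?F (x1 t)) - snd (?F (x2 t))) (at t within {0..a})"
      using d1 d2 that by (intro DERIV_diff vd_snd) auto
    then show ?thesis unfolding dc_def D2_def by simp
  qed
  have du: "\<forall>t\<in>{0..a}. (u has_real_derivative u' t) (at t within {0..a})"
    unfolding u_def u'_def
    by (intro ballI DERIV_minus DERIV_add DERIV_mult dds ddc) auto
  have hu: "\<forall>t\<in>{0..a}. u t < 0 \<longrightarrow> u' t \<ge> (2 * K0) * (min 0 (u t) + min 0 (u t))"
  proof (intro ballI impI)
    fix t assume t: "t \<in> {0..a}" and "u t < 0"
    have bnd: "\<bar>D1 t\<bar> + \<bar>D2 t\<bar> \<le> K0 * (\<bar>ds t\<bar> + \<bar>dc t\<bar>)"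
      unfolding D1_def D2_def ds_def dc_def K0_def
      using F_diff_bound[OF nn b1[rule_format, OF t] b2[rule_format, OF t]] by simp
    have i1: "D1 t * ds t + D2 t * dc t \<le> \<bar>D1 t\<bar> * \<bar>ds t\<bar> + \<bar>D2 t\<bar> * \<bar>dc t\<bar>"
      by (metis abs_ge_self abs_mult add_mono)
    have i2: "\<bar>D1 t\<bar> * \<bar>ds t\<bar> + \<bar>D2 t\<bar> * \<bar>dc t\<bar> \<le> (\<bar>D1 t\<bar> + \<bar>D2 t\<bar>) * (\<bar>ds t\<bar> + \<bar>dc t\<bar>)"
      by (simp add: algebra_simps)
    have i3: "(\<bar>D1 t\<bar> + \<bar>D2 t\<bar>) * (\<bar>ds t\<bar> + \<bar>dc t\<bar>) \<le> K0 * (\<bar>ds t\<bar> + \<bar>dc t\<bar>) * (\<bar>ds t\<bar> + \<bar>dc t\<bar>)"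
      using bnd by (intro mult_right_mono) auto
    have i4: "(\<bar>ds t\<bar> + \<bar>dc t\<bar>) * (\<bar>ds t\<bar> + \<bar>dc t\<bar>) \<le> 2 * (ds t * ds t + dc t * dc t)"
    proof -
      have "0 \<le> (\<bar>ds t\<bar> - \<bar>dc t\<bar>) * (\<bar>ds t\<bar> - \<bar>dc t\<bar>)" by simp
      then show ?thesis by (simp add: algebra_simps abs_mult_self_eq)
    qed
    have i5: "K0 * ((\<bar>ds t\<bar> + \<bar>dc t\<bar>) * (\<bar>ds t\<bar> + \<bar>dc t\<bar>)) \<le> K0 * (2 * (ds t * ds t + dc t * dc t))"
      using i4 K0 by (intro mult_left_mono) auto
    have "D1 t * ds t + D2 t * dc t \<le> K0 * (2 * (ds t * ds t + dc t * dc t))"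
      using i1 i2 i3 i5 by (simp add: mult.assoc)
    moreover have "min 0 (u t) = u t" unfolding u_def by simp
    ultimately show "u' t \<ge> (2 * K0) * (min 0 (u t) + min 0 (u t))"
      unfolding u'_def u_def by (simp add: algebra_simps)
  qed
  have u0: "u 0 \<ge> 0" unfolding u_def ds_def dc_def using e0 by simp
  have "\<forall>t\<in>{0..a}. u t \<ge> 0"
    using pos_pair[OF a _ du du u0 u0 hu hu] K0 by simp
  then show ?thesis
  proof (intro ballI)
    fix t assume "\<forall>t\<in>{0..a}. u t \<ge> 0" "t \<in> {0..a}"
    then have "u t \<ge> 0" by blast
    then have "ds t * ds t + dc t * dc t \<le> 0" unfolding u_def by linarith
    moreover have "ds t * ds t \<ge> 0" "dc t * dc t \<ge> 0" by simp_all
    ultimately have "ds t * ds t = 0" "dc t * dc t = 0" by linarith+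
    then have "ds t = 0" "dc t = 0" by simp_all
    then show "x1 t = x2 t" unfolding ds_def dc_def by (simp add: prod_eq_iff)
  qed
qed


lemma apriori:
  fixes k0 k1 km1 k2 eT S C :: real
  assumes nn: "k0 \<ge> 0" "k1 \<ge> 0" "km1 \<ge> 0" "k2 \<ge> 0" "eT \<ge> 0" and SC: "S \<ge> 0" "C \<ge> 0"
    and CeT: "eT \<le> C" and p: "p \<in> first_quadrant" and Cp: "snd p \<le> C"
    and sol: "is_solution (\<lambda>q. mm_field k0 k1 km1 k2 eT (clip S C q)) {0..} z" and z0: "z 0 = p"
    and t0: "t \<ge> 0"
  shows "z t \<in> first_quadrant \<and> snd (z t) \<le> C \<and> fst (z t) + snd (z t) \<le> fst p + snd p + k0 * t"
proof -
  let ?G = "\<lambda>q. mm_field k0 k1 km1 k2 eT (clip S C q)"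
  have d: "\<forall>\<tau>\<in>{0..t}. (z has_vector_derivative ?G (z \<tau>)) (at \<tau> within {0..t})"
    using sol_restrict[OF sol _ _ t0] t0 by simp
  define s where "s = (\<lambda>\<tau>. fst (z \<tau>))"
  define c where "c = (\<lambda>\<tau>. snd (z \<tau>))"
  define sh where "sh = (\<lambda>\<tau>. max 0 (min S (s \<tau>)))"
  define ch where "ch = (\<lambda>\<tau>. max 0 (min C (c \<tau>)))"
  have sh0: "sh \<tau> \<ge> 0" "ch \<tau> \<ge> 0" "ch \<tau> \<le> C" for \<tau> unfolding sh_def ch_def using SC by auto
  have G1: "fst (?G (z \<tau>)) = k0 - k1 * (eT - ch \<tau>) * sh \<tau> + km1 * ch \<tau>" for \<tau>
    unfolding sh_def ch_def s_def c_def clip_def by (simp add: mm_field_eq)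
  have G2: "snd (?G (z \<tau>)) = k1 * (eT - ch \<tau>) * sh \<tau> - (km1 + k2) * ch \<tau>" for \<tau>
    unfolding sh_def ch_def s_def c_def clip_def by (simp add: mm_field_eq)
  have ds: "\<forall>\<tau>\<in>{0..t}. (s has_real_derivative fst (?G (z \<tau>))) (at \<tau> within {0..t})"
    unfolding s_def using d vd_fst by blast
  have dc: "\<forall>\<tau>\<in>{0..t}. (c has_real_derivative snd (?G (z \<tau>))) (at \<tau> within {0..t})"
    unfolding c_def using d vd_snd by blast
  have p0: "s 0 \<ge> 0" "c 0 \<ge> 0" using p z0 unfolding first_quadrant_def s_def c_def by auto
  have hs: "\<forall>\<tau>\<in>{0..t}. s \<tau> < 0 \<longrightarrow> fst (?G (z \<tau>)) \<ge> 0 * (min 0 (s \<tau>) + min 0 (c \<tau>))"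
  proof (intro ballI impI)
    fix \<tau> assume "s \<tau> < 0"
    then have "sh \<tau> = 0" unfolding sh_def using SC by simp
    then show "fst (?G (z \<tau>)) \<ge> 0 * (min 0 (s \<tau>) + min 0 (c \<tau>))"
      unfolding G1 using nn sh0 by simp
  qed
  have hc: "\<forall>\<tau>\<in>{0..t}. c \<tau> < 0 \<longrightarrow> snd (?G (z \<tau>)) \<ge> 0 * (min 0 (s \<tau>) + min 0 (c \<tau>))"
  proof (intro ballI impI)
    fix \<tau> assume "c \<tau> < 0"
    then have "ch \<tau> = 0" unfolding ch_def using SC by simp
    then show "snd (?G (z \<tau>)) \<ge> 0 * (min 0 (s \<tau>) + min 0 (c \<tau>))"
      unfolding G2 using nn sh0 by simp
  qed
  have Q: "\<forall>\<tau>\<in>{0..t}. s \<tau> \<ge> 0 \<and> c \<tau> \<ge> 0"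
    by (rule pos_pair[OF t0 order_refl ds dc p0 hs hc])
  define u where "u = (\<lambda>\<tau>. C - c \<tau>)"
  have du: "\<forall>\<tau>\<in>{0..t}. (u has_real_derivative - snd (?G (z \<tau>))) (at \<tau> within {0..t})"
    unfolding u_def using dc by (auto intro!: derivative_eq_intros)
  have hu: "\<forall>\<tau>\<in>{0..t}. u \<tau> < 0 \<longrightarrow> - snd (?G (z \<tau>)) \<ge> 0"
  proof (intro ballI impI)
    fix \<tau> assume t: "\<tau> \<in> {0..t}" and "u \<tau> < 0"
    then have "ch \<tau> = C" unfolding ch_def u_def using SC by simp
    moreover have "k1 * (eT - C) * sh \<tau> \<le> 0"
      using nn CeT sh0 by (simp add: mult_nonpos_nonneg mult_nonneg_nonpos)
    moreover have "(km1 + k2) * C \<ge> 0" using nn SC by simp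
    ultimately show "- snd (?G (z \<tau>)) \<ge> 0" unfolding G2 by simp
  qed
  have Cb: "\<forall>\<tau>\<in>{0..t}. u \<tau> \<ge> 0"
    by (rule pos_single[OF t0 du _ hu]) (use Cp z0 in \<open>simp add: u_def c_def\<close>)
  define v where "v = (\<lambda>\<tau>. fst p + snd p + k0 * \<tau> - s \<tau> - c \<tau>)"
  have dv: "\<forall>\<tau>\<in>{0..t}. (v has_real_derivative k0 - fst (?G (z \<tau>)) - snd (?G (z \<tau>))) (at \<tau> within {0..t})"
    unfolding v_def using ds dc by (auto intro!: derivative_eq_intros)
  have hv: "\<forall>\<tau>\<in>{0..t}. v \<tau> < 0 \<longrightarrow> k0 - fst (?G (z \<tau>)) - snd (?G (z \<tau>)) \<ge> 0"
    unfolding G1 G2 using nn sh0 by (simp add: algebra_simps)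
  have Sb: "\<forall>\<tau>\<in>{0..t}. v \<tau> \<ge> 0"
    by (rule pos_single[OF t0 dv _ hv]) (use z0 in \<open>simp add: v_def s_def c_def\<close>)
  have tt: "t \<in> {0..t}" using t0 by simp
  have "s t \<ge> 0 \<and> c t \<ge> 0" "u t \<ge> 0" "v t \<ge> 0" using Q Cb Sb tt by blast+
  then show ?thesis unfolding first_quadrant_def u_def v_def s_def c_def by simp
qed


lemma exist_sol:
  fixes k0 k1 km1 k2 eT :: real
  assumes nn: "k0 \<ge> 0" "k1 \<ge> 0" "km1 \<ge> 0" "k2 \<ge> 0" "eT \<ge> 0"
    and p: "p \<in> first_quadrant"
  shows "\<exists>x. is_solution (mm_field k0 k1 km1 k2 eT) {0..} x \<and> x 0 = p"
proof -
  let ?F = "mm_field k0 k1 km1 k2 eT"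
  define C where "C = max (snd p) eT"
  define S where "S = (\<lambda>n::nat. fst p + snd p + k0 * real n)"
  have p0: "fst p \<ge> 0" "snd p \<ge> 0" using p unfolding first_quadrant_def by auto
  have C0: "C \<ge> 0" "eT \<le> C" "snd p \<le> C" unfolding C_def using nn by auto
  have S0: "S n \<ge> 0" for n unfolding S_def using p0 nn by simp
  have Smono: "m \<le> n \<Longrightarrow> S m \<le> S n" for m n unfolding S_def using nn by (simp add: mult_left_mono)
  define G where "G = (\<lambda>n q. ?F (clip (S n) C q))"
  have ex: "\<exists>z. is_solution (G n) {0..} z \<and> z 0 = p" for n
  proof -
    define K0 where "K0 = 2 * (k1 * eT + k1 * C + k1 * S n + km1) + k2"
    have K0: "K0 \<ge> 0" unfolding K0_def using nn C0 S0[of n] by simp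
    have L: "2 * K0 + 1 > 0" using K0 by simp
    have lip: "\<forall>a b. norm (G n a - G n b) \<le> (2 * K0 + 1) * norm (a - b)"
      unfolding G_def K0_def by (rule G_lip[OF nn S0 C0(1)])
    show ?thesis
      by (rule glue_global[of "1 / (2 * (2 * K0 + 1))"]) (use L picard_local[OF L lip] in auto)
  qed
  define z where "z = (\<lambda>n. SOME z. is_solution (G n) {0..} z \<and> z 0 = p)"
  have Z: "is_solution (G n) {0..} (z n) \<and> z n 0 = p" for n
    unfolding z_def using someI_ex[OF ex[of n]] .
  have AP: "z n t \<in> first_quadrant \<and> snd (z n t) \<le> C \<and> fst (z n t) + snd (z n t) \<le> fst p + snd p + k0 * t"
    if "t \<ge> 0" for n t
    using apriori[OF nn S0 C0(1) C0(2) p C0(3), of n "z n" t] Z[of n] that unfolding G_def by blast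
  have box: "inbox (S m) C (z n t)" if "t \<in> {0..real n}" "n \<le> m" for n m t
  proof -
    have t0: "t \<ge> 0" using that by simp
    have "fst (z n t) \<le> fst p + snd p + k0 * t" using AP[OF t0, of n] unfolding first_quadrant_def by auto
    also have "\<dots> \<le> S n" unfolding S_def using that nn by (simp add: mult_left_mono)
    also have "\<dots> \<le> S m" using Smono that by simp
    finally show ?thesis using AP[OF t0, of n] unfolding inbox_def first_quadrant_def by auto
  qed
  have dF: "(z n has_vector_derivative ?F (z n t)) (at t within {0..})" if "t \<in> {0..real n}" for n t
  proof -
    have "(z n has_vector_derivative G n (z n t)) (at t within {0..})"
      using Z[of n] that unfolding is_solution_def by simp
    moreover have "G n (z n t) = ?F (z n t)"
      unfolding G_def using clip_id[OF box[OF that order_refl]] by simp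
    ultimately show ?thesis by simp
  qed
  have cons: "z m t = z n t" if "m \<le> n" "t \<in> {0..real m}" for m n t
  proof -
    have sub: "{0..real m} \<subseteq> {0..real n}" using that by auto
    have "\<forall>t\<in>{0..real m}. z m t = z n t"
    proof (rule uniq_box[OF nn S0 C0(1), of "real m"])
      show "0 \<le> real m" by simp
      show "\<forall>t\<in>{0..real m}. (z m has_vector_derivative ?F (z m t)) (at t within {0..real m})"
      proof
        fix t assume t: "t \<in> {0..real m}"
        show "(z m has_vector_derivative ?F (z m t)) (at t within {0..real m})"
          by (rule has_vector_derivative_within_subset[OF dF[OF t]]) auto
      qed
      show "\<forall>t\<in>{0..real m}. (z n has_vector_derivative ?F (z n t)) (at t within {0..real m})"
      proof
        fix t assume t: "t \<in> {0..real m}"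
        then have t': "t \<in> {0..real n}" using sub by blast
        show "(z n has_vector_derivative ?F (z n t)) (at t within {0..real m})"
          by (rule has_vector_derivative_within_subset[OF dF[OF t']]) auto
      qed
      show "\<forall>t\<in>{0..real m}. inbox (S n) C (z m t)" using box that by blast
      show "\<forall>t\<in>{0..real m}. inbox (S n) C (z n t)" using box sub by blast
      show "z m 0 = z n 0" using Z by simp
    qed
    then show ?thesis using that by blast
  qed
  define N where "N = (\<lambda>t::real. Suc (nat \<lceil>t\<rceil>))"
  have Nt: "t < real (N t)" for t unfolding N_def by linarith
  define x where "x = (\<lambda>t. z (N t) t)"
  have agree: "x \<tau> = z m \<tau>" if "\<tau> \<ge> 0" "\<tau> \<le> real m" for \<tau> m
  proof (cases "N \<tau> \<le> m")
    case True
    then show ?thesis unfolding x_def using cons[OF True, of \<tau>] Nt[of \<tau>] that by simp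
  next
    case False
    then show ?thesis unfolding x_def using cons[of m "N \<tau>" \<tau>] that by simp
  qed
  have deriv: "(x has_vector_derivative ?F (x t)) (at t within {0..})" if t0: "t \<ge> 0" for t
  proof -
    define m where "m = N t"
    have tm: "t < real m" unfolding m_def by (rule Nt)
    have xt: "x t = z m t" using agree[OF t0] tm by simp
    have "(z m has_vector_derivative ?F (z m t)) (at t within {0..})"
      by (rule dF) (use t0 tm in simp)
    then have "(z m has_vector_derivative ?F (x t)) (at t within {0..})" using xt by simp
    then show ?thesis
    proof (rule has_vector_derivative_transform_within[of _ _ _ _ "real m - t"])
      show "0 < real m - t" using tm by simp
      show "t \<in> {0..}" using t0 by simp
      fix \<tau> assume "\<tau> \<in> {0..}" "dist \<tau> t < real m - t"
      then show "z m \<tau> = x \<tau>" using agree[of \<tau> m] by (auto simp: dist_real_def)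
    qed
  qed
  have "x 0 = p" unfolding x_def using Z by simp
  moreover have "is_solution ?F {0..} x"
    unfolding is_solution_def using deriv by (auto simp: is_interval_ci)
  ultimately show ?thesis by blast
qed


theorem lemma3p1:
  fixes k0 k1 km1 k2 eT :: real
  assumes "k0 \<ge> 0" and "k1 \<ge> 0" and "km1 \<ge> 0" and "k2 \<ge> 0" and "eT \<ge> 0"
  defines "F \<equiv> mm_field k0 k1 km1 k2 eT"
    and "P0 \<equiv> ((km1 + k2) * k0 / (k1 * (k2 * eT - k0)), k0 / k2)"
  shows
    \<comment> \<open>(a)\<close>
    "(infinite {p. F p = 0} \<longleftrightarrow>
       (k0 = 0 \<and> k1 = 0) \<or> (k0 = 0 \<and> eT = 0) \<or> (k0 = 0 \<and> k2 = 0))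
    \<comment> \<open>(b)\<close>
   \<and> (finite {p. F p = 0} \<longrightarrow> card {p. F p = 0} \<in> {0, 1})
   \<and> (card {p. F p = 0} = 1 \<longleftrightarrow> k1 \<noteq> 0 \<and> k2 \<noteq> 0 \<and> k2 * eT - k0 \<noteq> 0)
   \<and> (k1 \<noteq> 0 \<and> k2 \<noteq> 0 \<and> k2 * eT - k0 \<noteq> 0 \<longrightarrow>
        {p. F p = 0} = {P0}
      \<and> (P0 \<in> first_quadrant \<longleftrightarrow> k2 * eT - k0 > 0)
      \<and> (k2 * eT - k0 > 0 \<longrightarrow> attracting_node F P0)
      \<and> (P0 \<in> second_quadrant \<longleftrightarrow> k2 * eT - k0 < 0)
      \<and> (k2 * eT - k0 < 0 \<longrightarrow> saddle_point F P0))
    \<comment> \<open>(c)\<close>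
   \<and> (\<forall>I x t. is_solution F I x \<and> 0 \<in> I \<and> x 0 \<in> first_quadrant \<and> t \<in> I \<and> t \<ge> 0
        \<longrightarrow> x t \<in> first_quadrant)
   \<and> (\<forall>p \<in> first_quadrant. \<exists>x. is_solution F {0..} x \<and> x 0 = p)
   \<and> (km1 + k2 > 0 \<longrightarrow>
        (\<forall>x. eT > 0 \<and> is_solution F {0..} x \<and> x 0 \<in> first_quadrant
           \<longrightarrow> (\<exists>t>0. snd (x t) \<le> eT))
      \<and> (\<forall>I x t. is_solution F I x \<and> 0 \<in> I \<and> x 0 \<in> first_quadrant \<and> snd (x 0) \<le> eT
           \<and> t \<in> I \<and> t \<ge> 0 \<longrightarrow> x t \<in> first_quadrant \<and> snd (x t) \<le> eT))
    \<comment> \<open>(d)\<close>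
   \<and> (\<forall>x T. is_solution F UNIV x \<and> T > 0 \<and> (\<forall>t. x (t + T) = x t)
        \<longrightarrow> (\<forall>t. x t = x 0))"
  proof -
  have nn: "k0 \<ge> 0" "k1 \<ge> 0" "km1 \<ge> 0" "k2 \<ge> 0" "eT \<ge> 0" using assms by auto
  let ?Z = "{p. F p = 0}"
  let ?inf = "(k0 = 0 \<and> k1 = 0) \<or> (k0 = 0 \<and> eT = 0) \<or> (k0 = 0 \<and> k2 = 0)"
  let ?one = "k1 \<noteq> 0 \<and> k2 \<noteq> 0 \<and> k2 * eT - k0 \<noteq> 0"
  have Zinf: "?inf \<Longrightarrow> infinite ?Z" unfolding F_def by (rule stat_infinite)
  have Zone: "?one \<Longrightarrow> ?Z = {P0}" unfolding F_def P0_def using stat_unique by blast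
  have Zempty: "\<not> ?one \<Longrightarrow> \<not> ?inf \<Longrightarrow> ?Z = {}" unfolding F_def using stat_empty[OF nn] by blast
  have oneinf: "?one \<Longrightarrow> \<not> ?inf" using nn by auto
  have A: "infinite ?Z \<longleftrightarrow> ?inf"
  proof
    assume inf: "infinite ?Z"
    show ?inf
    proof (rule ccontr)
      assume ni: "\<not> ?inf"
      show False
      proof (cases ?one)
        case True
        then have e: "?Z = {P0}" by (rule Zone)
        show False using inf unfolding e by simp
      next
        case False
        then have e: "?Z = {}" using ni by (rule Zempty)
        show False using inf unfolding e by simp
      qed
    qed
  qed (rule Zinf)
  have B1: "finite ?Z \<longrightarrow> card ?Z \<in> {0, 1}"
  proof
    assume fin: "finite ?Z"
    then have ni: "\<not> ?inf" using Zinf by blast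
    show "card ?Z \<in> {0, 1}"
    proof (cases ?one)
      case True
      then have e: "?Z = {P0}" by (rule Zone)
      show ?thesis unfolding e by simp
    next
      case False
      then have e: "?Z = {}" using ni by (rule Zempty)
      show ?thesis unfolding e by simp
    qed
  qed
  have B2: "card ?Z = 1 \<longleftrightarrow> ?one"
  proof
    assume c: "card ?Z = 1"
    show ?one
    proof (rule ccontr)
      assume no: "\<not> ?one"
      show False
      proof (cases ?inf)
        case True
        then have "infinite ?Z" by (rule Zinf)
        then show False using c by simp
      next
        case False
        then have e: "?Z = {}" using no by (intro Zempty)
        show False using c unfolding e by simp
      qed
    qed
  next
    assume ?one
    then have e: "?Z = {P0}" by (rule Zone)
    show "card ?Z = 1" unfolding e by simp
  qed
  have B3: "?one \<longrightarrow> ?Z = {P0}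
      \<and> (P0 \<in> first_quadrant \<longleftrightarrow> k2 * eT - k0 > 0)
      \<and> (k2 * eT - k0 > 0 \<longrightarrow> attracting_node F P0)
      \<and> (P0 \<in> second_quadrant \<longleftrightarrow> k2 * eT - k0 < 0)
      \<and> (k2 * eT - k0 < 0 \<longrightarrow> saddle_point F P0)"
  proof
    assume o: ?one
    have "?Z = {P0}" using Zone[OF o] .
    moreover have "(P0 \<in> first_quadrant \<longleftrightarrow> k2 * eT - k0 > 0)
      \<and> (k2 * eT - k0 > 0 \<longrightarrow> attracting_node F P0)
      \<and> (P0 \<in> second_quadrant \<longleftrightarrow> k2 * eT - k0 < 0)
      \<and> (k2 * eT - k0 < 0 \<longrightarrow> saddle_point F P0)"
      unfolding F_def P0_def using P0_props[OF nn] o by blast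
    ultimately show "?Z = {P0}
      \<and> (P0 \<in> first_quadrant \<longleftrightarrow> k2 * eT - k0 > 0)
      \<and> (k2 * eT - k0 > 0 \<longrightarrow> attracting_node F P0)
      \<and> (P0 \<in> second_quadrant \<longleftrightarrow> k2 * eT - k0 < 0)
      \<and> (k2 * eT - k0 < 0 \<longrightarrow> saddle_point F P0)" by blast
  qed
  have C1: "\<forall>I x t. is_solution F I x \<and> 0 \<in> I \<and> x 0 \<in> first_quadrant \<and> t \<in> I \<and> t \<ge> 0
        \<longrightarrow> x t \<in> first_quadrant"
    unfolding F_def using invariant_Q[OF nn] by blast
  have C2: "\<forall>p \<in> first_quadrant. \<exists>x. is_solution F {0..} x \<and> x 0 = p"
    unfolding F_def using exist_sol[OF nn] by blast
  have C3: "km1 + k2 > 0 \<longrightarrow>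
        (\<forall>x. eT > 0 \<and> is_solution F {0..} x \<and> x 0 \<in> first_quadrant
           \<longrightarrow> (\<exists>t>0. snd (x t) \<le> eT))
      \<and> (\<forall>I x t. is_solution F I x \<and> 0 \<in> I \<and> x 0 \<in> first_quadrant \<and> snd (x 0) \<le> eT
           \<and> t \<in> I \<and> t \<ge> 0 \<longrightarrow> x t \<in> first_quadrant \<and> snd (x t) \<le> eT)"
    unfolding F_def using enter_eT[OF nn] invariant_QeT[OF nn] by blast
  have D: "\<forall>x T. is_solution F UNIV x \<and> T > 0 \<and> (\<forall>t. x (t + T) = x t)
        \<longrightarrow> (\<forall>t. x t = x 0)"
    unfolding F_def using no_periodic[OF nn] by blast
  show ?thesis using A B1 B2 B3 C1 C2 C3 D by blast
qed

end
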